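(* (a) Let $X\subseteq\mathbb{R}$ be r.e. open. Every continuous and effectively open $f:X\to\mathbb{R}$ is computable. (b) Let $X\subseteq\mathbb{R}^n$ be r.e. open and $f=(f_1,\dots,f_m):X\to\mathbb{R}^m$ continuous and effectively open but not computable. Then some component $f_i:X\to\mathbb{R}$ is continuous and effectively open but not computable.
   Context: Type-2 computability (Weihrauch) with Cauchy representation for real vectors; $\theta^d_<$ represents open subsets of $\mathbb{R}^d$ by lists of rational centers and radii of open balls with union the set; $X$ r.e. open means it has a computable $\theta^n_<$-name. An open $f$ on $X$ is effectively open if $U\mapsto f[U]$ on open $U\subseteq X$ is $(\theta^n_<\to\theta^m_<)$-computable. *)

theory Defs
  imports Complex_Main "HOL-Library.Nat_Bijection"
begin

datatype recf = Zf | Sf | Pf nat | Cnf recf "recf list" | Prf recf recf | Mnf recf | Orc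

definition arg :: "nat list \<Rightarrow> nat \<Rightarrow> nat" where
  "arg xs i = (if i < length xs then xs ! i else 0)"

inductive oeval :: "(nat \<Rightarrow> nat) \<Rightarrow> recf \<Rightarrow> nat list \<Rightarrow> nat \<Rightarrow> bool" for orc where
  zero: "oeval orc Zf xs 0"
| succ: "oeval orc Sf xs (Suc (arg xs 0))"
| proj: "oeval orc (Pf i) xs (arg xs i)"
| orac: "oeval orc Orc xs (orc (arg xs 0))"
| comp: "length ys = length gs \<Longrightarrow> (\<forall>i<length gs. oeval orc (gs ! i) xs (ys ! i))
          \<Longrightarrow> oeval orc f ys z \<Longrightarrow> oeval orc (Cnf f gs) xs z"
| prim0: "oeval orc f ys y \<Longrightarrow> oeval orc (Prf f g) (0 # ys) y"
| primS: "oeval orc (Prf f g) (n # ys) y \<Longrightarrow> oeval orc g (n # y # ys) z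
          \<Longrightarrow> oeval orc (Prf f g) (Suc n # ys) z"
| mu: "oeval orc f (n # xs) 0 \<Longrightarrow> (\<forall>k<n. \<exists>y. 0 < y \<and> oeval orc f (k # xs) y)
          \<Longrightarrow> oeval orc (Mnf f) xs n"

definition computable_seq :: "(nat \<Rightarrow> nat) \<Rightarrow> bool" where
  "computable_seq p \<longleftrightarrow> (\<exists>e. \<forall>n. oeval (\<lambda>_. 0) e [n] (p n))"

text \<open>Type-2 computability of f on domain D w.r.t. representations delta, gamma
  (a representation is a relation "name p denotes a").\<close>
definition computable_on ::
  "((nat \<Rightarrow> nat) \<Rightarrow> 'a \<Rightarrow> bool) \<Rightarrow> ((nat \<Rightarrow> nat) \<Rightarrow> 'b \<Rightarrow> bool) \<Rightarrow> 'a set \<Rightarrow> ('a \<Rightarrow> 'b) \<Rightarrow> bool" where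
  "computable_on \<delta> \<gamma> D f \<longleftrightarrow>
     (\<exists>e. \<forall>p a. a \<in> D \<longrightarrow> \<delta> p a \<longrightarrow> (\<exists>q. (\<forall>n. oeval p e [n] (q n)) \<and> \<gamma> q (f a)))"

definition rat_code :: "nat \<Rightarrow> real" where
  "rat_code k = (case prod_decode k of (a, b) \<Rightarrow> of_int (int_decode a) / real (Suc b))"

definition vec_code :: "nat \<Rightarrow> real list" where
  "vec_code k = map rat_code (list_decode k)"

definition rdist :: "real list \<Rightarrow> real list \<Rightarrow> real" where
  "rdist x y = sqrt (\<Sum>i<length x. (x ! i - y ! i)^2)"

definition rball :: "nat \<Rightarrow> real list \<Rightarrow> real \<Rightarrow> real list set" where
  "rball d c r = {x. length x = d \<and> length c = d \<and> rdist x c < r}"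

definition ropen :: "nat \<Rightarrow> real list set \<Rightarrow> bool" where
  "ropen d U \<longleftrightarrow> (\<forall>x\<in>U. length x = d \<and> (\<exists>r>0. rball d x r \<subseteq> U))"

definition cauchy_name :: "nat \<Rightarrow> (nat \<Rightarrow> nat) \<Rightarrow> real list \<Rightarrow> bool" where
  "cauchy_name d p x \<longleftrightarrow> length x = d \<and>
     (\<forall>k. length (vec_code (p k)) = d \<and> (\<forall>i<d. \<bar>vec_code (p k) ! i - x ! i\<bar> \<le> (1/2)^k))"

definition theta_name :: "nat \<Rightarrow> (nat \<Rightarrow> nat) \<Rightarrow> real list set \<Rightarrow> bool" where
  "theta_name d p U \<longleftrightarrow>
     U = (\<Union>k. case prod_decode (p k) of (c, r) \<Rightarrow> rball d (vec_code c) (rat_code r))"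

definition re_open :: "nat \<Rightarrow> real list set \<Rightarrow> bool" where
  "re_open d X \<longleftrightarrow> (\<exists>p. computable_seq p \<and> theta_name d p X)"

definition rcont :: "nat \<Rightarrow> nat \<Rightarrow> real list set \<Rightarrow> (real list \<Rightarrow> real list) \<Rightarrow> bool" where
  "rcont n m X f \<longleftrightarrow> (\<forall>x\<in>X. length (f x) = m) \<and>
     (\<forall>x\<in>X. \<forall>\<epsilon>>0. \<exists>\<delta>>0. \<forall>y\<in>X. rdist y x < \<delta> \<longrightarrow> rdist (f y) (f x) < \<epsilon>)"

definition eff_open :: "nat \<Rightarrow> nat \<Rightarrow> real list set \<Rightarrow> (real list \<Rightarrow> real list) \<Rightarrow> bool" where
  "eff_open n m X f \<longleftrightarrow>
     (\<forall>U. ropen n U \<and> U \<subseteq> X \<longrightarrow> ropen m (f ` U)) \<and>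
     computable_on (theta_name n) (theta_name m) {U. ropen n U \<and> U \<subseteq> X} (\<lambda>U. f ` U)"

definition rcomputable :: "nat \<Rightarrow> nat \<Rightarrow> real list set \<Rightarrow> (real list \<Rightarrow> real list) \<Rightarrow> bool" where
  "rcomputable n m X f \<longleftrightarrow> computable_on (cauchy_name n) (cauchy_name m) X f"

end

theory Submission
  imports Defs
begin



definition ncons :: "nat \<Rightarrow> (nat \<Rightarrow> nat) \<Rightarrow> nat \<Rightarrow> nat" where
  "ncons n a = (\<lambda>i. if i = 0 then n else a (i - 1))"

lemma arg_Cons: "arg (n # xs) = ncons n (arg xs)"
  by (auto simp: arg_def ncons_def fun_eq_iff nth_Cons')

lemma ncons_simps[simp]: "ncons n a 0 = n" "ncons n a (Suc i) = a i"
  "ncons n a 1 = a 0" "ncons n a (numeral (Num.Bit0 k)) = a (numeral (Num.Bit0 k) - 1)"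
  "ncons n a (numeral (Num.Bit1 k)) = a (numeral (Num.Bit1 k) - 1)"
  by (auto simp: ncons_def)

definition rc :: "((nat\<Rightarrow>nat) \<Rightarrow> bool) \<Rightarrow> recf \<Rightarrow> ((nat\<Rightarrow>nat) \<Rightarrow> (nat\<Rightarrow>nat) \<Rightarrow> nat) \<Rightarrow> bool" where
  "rc P e F \<longleftrightarrow> (\<forall>p xs. P p \<longrightarrow> oeval p e xs (F p (arg xs)))"

lemma rcD: "rc P e F \<Longrightarrow> P p \<Longrightarrow> oeval p e xs (F p (arg xs))"
  by (auto simp: rc_def)

lemma rc_mono: "rc Q e F \<Longrightarrow> (\<And>p. P p \<Longrightarrow> Q p) \<Longrightarrow> rc P e F"
  by (auto simp: rc_def)

lemma rc_cong: "rc P e F \<Longrightarrow> (\<And>p a. P p \<Longrightarrow> F p a = G p a) \<Longrightarrow> rc P e G"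
  by (auto simp: rc_def)

lemma rc_Z: "rc P Zf (\<lambda>p a. 0)"
  by (auto simp: rc_def intro: oeval.intros)
lemma rc_S: "rc P Sf (\<lambda>p a. Suc (a 0))"
  by (auto simp: rc_def intro: oeval.intros)
lemma rc_Pf: "rc P (Pf i) (\<lambda>p a. a i)"
  by (auto simp: rc_def intro: oeval.intros)
lemma rc_Orc: "rc P Orc (\<lambda>p a. p (a 0))"
  by (auto simp: rc_def intro: oeval.intros)

lemma rc_Cnf:
  assumes "rc P f F" "length gs = length Gs" "\<And>i. i < length gs \<Longrightarrow> rc P (gs ! i) (Gs ! i)"
  shows "rc P (Cnf f gs) (\<lambda>p a. F p (arg (map (\<lambda>G. G p a) Gs)))"
  unfolding rc_def
proof (intro allI impI)
  fix p xs assume P: "P p"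
  show "oeval p (Cnf f gs) xs (F p (arg (map (\<lambda>G. G p (arg xs)) Gs)))"
    apply (rule oeval.comp[where ys = "map (\<lambda>G. G p (arg xs)) Gs"])
    using assms P by (auto simp: rc_def)
qed

lemma rc_Cnf1: "rc P f F \<Longrightarrow> rc P g G \<Longrightarrow> rc P (Cnf f [g]) (\<lambda>p a. F p (arg [G p a]))"
  using rc_Cnf[of P f F "[g]" "[G]"] by auto
lemma rc_Cnf2: assumes "rc P f F" "rc P g G" "rc P h H" shows "rc P (Cnf f [g,h]) (\<lambda>p a. F p (arg [G p a, H p a]))"
proof -
  have "\<And>i. i < length [g,h] \<Longrightarrow> rc P ([g,h]!i) ([G,H]!i)" using assms by (auto simp: less_Suc_eq)
  from rc_Cnf[OF assms(1) _ this] show ?thesis by simp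
qed
lemma rc_Cnf3: assumes "rc P f F" "rc P g G" "rc P h H" "rc P k K" shows
   "rc P (Cnf f [g,h,k]) (\<lambda>p a. F p (arg [G p a, H p a, K p a]))"
proof -
  have "\<And>i. i < length [g,h,k] \<Longrightarrow> rc P ([g,h,k]!i) ([G,H,K]!i)" using assms by (auto simp: less_Suc_eq)
  from rc_Cnf[OF assms(1) _ this] show ?thesis by simp
qed

lemma rc_search:
  assumes "rc P f F" "\<And>p a. P p \<Longrightarrow> F p (ncons (R p a) a) = 0"
    "\<And>p a m. P p \<Longrightarrow> m < R p a \<Longrightarrow> F p (ncons m a) \<noteq> 0"
  shows "rc P (Mnf f) R"
  unfolding rc_def
proof (intro allI impI)
  fix p xs assume P: "P p"
  show "oeval p (Mnf f) xs (R p (arg xs))"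
    apply (rule oeval.mu)
    using rcD[OF assms(1) P, of "R p (arg xs) # xs"] assms(2)[OF P, of "arg xs"]
     apply (simp add: arg_Cons)
    using rcD[OF assms(1) P] assms(3)[OF P, of _ "arg xs"] by (metis arg_Cons gr0I)
qed

primrec osubst :: "recf \<Rightarrow> recf \<Rightarrow> recf" where
  "osubst g Zf = Zf"
| "osubst g Sf = Sf"
| "osubst g (Pf i) = Pf i"
| "osubst g (Cnf f gs) = Cnf (osubst g f) (map (osubst g) gs)"
| "osubst g (Prf f h) = Prf (osubst g f) (osubst g h)"
| "osubst g (Mnf f) = Mnf (osubst g f)"
| "osubst g Orc = Cnf g [Pf 0]"

lemma oeval_subst:
  assumes "oeval q e xs y" "\<And>k. oeval p g [k] (q k)"
  shows "oeval p (osubst g e) xs y"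
  using assms(1)
proof (induction rule: oeval.induct)
  case (orac xs)
  show ?case
    apply simp
    apply (rule oeval.comp[where ys="[arg xs 0]"])
    using assms(2)[of "arg xs 0"] oeval.proj[of p 0 xs] by auto
next
  case (comp ys gs xs f z)
  then show ?case by (auto intro!: oeval.comp)
qed (auto intro: oeval.intros)




fun PRr :: "((nat\<Rightarrow>nat) \<Rightarrow> nat) \<Rightarrow> ((nat\<Rightarrow>nat) \<Rightarrow> nat) \<Rightarrow> nat \<Rightarrow> (nat\<Rightarrow>nat) \<Rightarrow> nat" where
  "PRr Fb Gs 0 a = Fb a"
| "PRr Fb Gs (Suc n) a = Gs (ncons n (ncons (PRr Fb Gs n a) a))"

lemma oeval_Prf:
  assumes "rc P f F" "rc P g G" "P p"
  shows "oeval p (Prf f g) (n # ys) (PRr (F p) (G p) n (arg ys))"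
proof (induction n)
  case 0
  then show ?case using rcD[OF assms(1,3)] by (auto intro: oeval.prim0)
next
  case (Suc n)
  show ?case
    apply simp
    apply (rule oeval.primS[OF Suc])
    using rcD[OF assms(2,3), of "n # PRr (F p) (G p) n (arg ys) # ys"] by (simp add: arg_Cons)
qed

lemma rc_Prf2:
  assumes "rc P f F" "rc P g G" "rc P h H" "rc P k K"
  shows "rc P (Cnf (Prf f g) [h, k]) (\<lambda>p a. PRr (F p) (G p) (H p a) (arg [K p a]))"
  unfolding rc_def
proof (intro allI impI)
  fix p xs assume P: "P p"
  show "oeval p (Cnf (Prf f g) [h, k]) xs (PRr (F p) (G p) (H p (arg xs)) (arg [K p (arg xs)]))"
    apply (rule oeval.comp[where ys="[H p (arg xs), K p (arg xs)]"])
    using rcD[OF assms(3) P] rcD[OF assms(4) P] oeval_Prf[OF assms(1,2) P]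
    by (auto simp: less_Suc_eq)
qed

lemma rc_Prf1:
  assumes "rc P f F" "rc P g G" "rc P h H"
  shows "rc P (Cnf (Prf f g) [h]) (\<lambda>p a. PRr (F p) (G p) (H p a) (arg []))"
  unfolding rc_def
proof (intro allI impI)
  fix p xs assume P: "P p"
  show "oeval p (Cnf (Prf f g) [h]) xs (PRr (F p) (G p) (H p (arg xs)) (arg []))"
    apply (rule oeval.comp[where ys="[H p (arg xs)]"])
    using rcD[OF assms(3) P] oeval_Prf[OF assms(1,2) P]
    by (auto simp: less_Suc_eq)
qed

definition "ADDp = Cnf (Prf (Pf 0) (Cnf Sf [Pf 1])) [Pf 1, Pf 0]"
lemma ADDp: "rc P ADDp (\<lambda>p a. a 0 + a 1)"
proof -
  have "rc P ADDp (\<lambda>p a. PRr (\<lambda>a. a 0) (\<lambda>a'. Suc (arg [a' 1] 0)) (a 1) (arg [a 0]))"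
    unfolding ADDp_def using rc_Prf2[OF rc_Pf rc_Cnf1[OF rc_S rc_Pf] rc_Pf rc_Pf] by simp
  moreover have "PRr (\<lambda>a. a 0) (\<lambda>a'. Suc (arg [a' 1] 0)) n (arg [x]) = x + n" for n x
    by (induction n) (auto simp: arg_def)
  ultimately show ?thesis by (rule rc_cong; simp)
qed

definition "MULp = Cnf (Prf Zf (Cnf ADDp [Pf 1, Pf 2])) [Pf 1, Pf 0]"
lemma MULp: "rc P MULp (\<lambda>p a. a 0 * a 1)"
proof -
  have "rc P MULp (\<lambda>p a. PRr (\<lambda>a. 0) (\<lambda>a'. arg [a' 1, a' 2] 0 + arg [a' 1, a' 2] 1) (a 1) (arg [a 0]))"
    unfolding MULp_def using rc_Prf2[OF rc_Z rc_Cnf2[OF ADDp rc_Pf rc_Pf] rc_Pf rc_Pf] by simp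
  moreover have "PRr (\<lambda>a. 0) (\<lambda>a'. arg [a' 1, a' 2] 0 + arg [a' 1, a' 2] 1) n (arg [x]) = x * n" for n x
    by (induction n) (auto simp: arg_def)
  ultimately show ?thesis by (rule rc_cong; simp)
qed

definition "PREDp = Cnf (Prf Zf (Pf 0)) [Pf 0]"
lemma PREDp: "rc P PREDp (\<lambda>p a. a 0 - 1)"
proof -
  have "rc P PREDp (\<lambda>p a. PRr (\<lambda>a. 0) (\<lambda>a'. a' 0) (a 0) (arg []))"
    unfolding PREDp_def using rc_Prf1[OF rc_Z rc_Pf rc_Pf] by simp
  moreover have "PRr (\<lambda>a. 0) (\<lambda>a'. a' 0) n (arg []) = n - 1" for n
    by (induction n) (auto simp: arg_def)
  ultimately show ?thesis by (rule rc_cong; simp)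
qed

definition "SUBp = Cnf (Prf (Pf 0) (Cnf PREDp [Pf 1])) [Pf 1, Pf 0]"
lemma SUBp: "rc P SUBp (\<lambda>p a. a 0 - a 1)"
proof -
  have "rc P SUBp (\<lambda>p a. PRr (\<lambda>a. a 0) (\<lambda>a'. arg [a' 1] 0 - 1) (a 1) (arg [a 0]))"
    unfolding SUBp_def using rc_Prf2[OF rc_Pf rc_Cnf1[OF PREDp rc_Pf] rc_Pf rc_Pf] by simp
  moreover have "PRr (\<lambda>a. a 0) (\<lambda>a'. arg [a' 1] 0 - 1) n (arg [x]) = x - n" for n x
    by (induction n) (auto simp: arg_def)
  ultimately show ?thesis by (rule rc_cong; simp)
qed

definition "POW2p = Cnf (Prf (Cnf Sf [Zf]) (Cnf ADDp [Pf 1, Pf 1])) [Pf 0]"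
lemma POW2p: "rc P POW2p (\<lambda>p a. 2 ^ a 0)"
proof -
  have "rc P POW2p (\<lambda>p a. PRr (\<lambda>a. Suc (arg [0] 0)) (\<lambda>a'. arg [a' 1, a' 1] 0 + arg [a' 1, a' 1] 1) (a 0) (arg []))"
    unfolding POW2p_def using rc_Prf1[OF rc_Cnf1[OF rc_S rc_Z] rc_Cnf2[OF ADDp rc_Pf rc_Pf] rc_Pf] by simp
  moreover have "PRr (\<lambda>a. Suc (arg [0] 0)) (\<lambda>a'. arg [a' 1, a' 1] 0 + arg [a' 1, a' 1] 1) n (arg []) = 2 ^ n" for n
    by (induction n) (auto simp: arg_def)
  ultimately show ?thesis by (rule rc_cong; simp)
qed

primrec cprog :: "nat \<Rightarrow> recf" where
  "cprog 0 = Zf" | "cprog (Suc n) = Cnf Sf [cprog n]"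

lemma rc_const: "rc P (cprog c) (\<lambda>p a. c)"
proof (induction c)
  case 0 then show ?case by (simp add: rc_Z)
next
  case (Suc c) then show ?case using rc_Cnf1[OF rc_S Suc] by (simp add: arg_def)
qed

lemma rc_true: "rc (\<lambda>_. True) f F \<Longrightarrow> rc P f F"
  by (rule rc_mono) auto
lemma lift1: assumes "rc (\<lambda>_. True) f (\<lambda>p a. F (a 0))" "rc P g G" shows "rc P (Cnf f [g]) (\<lambda>p a. F (G p a))"
  using rc_Cnf1[OF rc_true[OF assms(1)] assms(2)] by (simp add: arg_def)
lemma lift2: assumes "rc (\<lambda>_. True) f (\<lambda>p a. F (a 0) (a 1))" "rc P g G" "rc P h H" shows
   "rc P (Cnf f [g, h]) (\<lambda>p a. F (G p a) (H p a))"
  using rc_Cnf2[OF rc_true[OF assms(1)] assms(2,3)] by (simp add: arg_def)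
lemma lift3: assumes "rc (\<lambda>_. True) f (\<lambda>p a. F (a 0) (a 1) (a 2))" "rc P g G" "rc P h H" "rc P k K" shows
   "rc P (Cnf f [g, h, k]) (\<lambda>p a. F (G p a) (H p a) (K p a))"
  using rc_Cnf3[OF rc_true[OF assms(1)] assms(2,3,4)] by (simp add: arg_def)

lemma rc_add: "rc P g G \<Longrightarrow> rc P h H \<Longrightarrow> rc P (Cnf ADDp [g, h]) (\<lambda>p a. G p a + H p a)"
  by (rule lift2[OF ADDp])
lemma rc_mul: "rc P g G \<Longrightarrow> rc P h H \<Longrightarrow> rc P (Cnf MULp [g, h]) (\<lambda>p a. G p a * H p a)"
  by (rule lift2[OF MULp])
lemma rc_sub: "rc P g G \<Longrightarrow> rc P h H \<Longrightarrow> rc P (Cnf SUBp [g, h]) (\<lambda>p a. G p a - H p a)"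
  by (rule lift2[OF SUBp])
lemma rc_pow2: "rc P g G \<Longrightarrow> rc P (Cnf POW2p [g]) (\<lambda>p a. 2 ^ G p a)"
  by (rule lift1[OF POW2p])
lemma rc_orc: "rc P g G \<Longrightarrow> rc P (Cnf Orc [g]) (\<lambda>p a. p (G p a))"
  using rc_Cnf1[OF rc_Orc] by (simp add: arg_def)
lemma rc_suc: "rc P g G \<Longrightarrow> rc P (Cnf Sf [g]) (\<lambda>p a. Suc (G p a))"
  using rc_Cnf1[OF rc_S] by (simp add: arg_def)

lemmas rc_base = rc_add rc_mul rc_sub rc_pow2 rc_suc rc_const rc_Pf




definition ltb :: "nat \<Rightarrow> nat \<Rightarrow> nat" where "ltb x y = (if x < y then 1 else 0)"
lemma ltb_alt: "ltb x y = 1 - (1 - (y - x))" by (auto simp: ltb_def)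
definition "LTBp = (SOME e. rc (\<lambda>_. True) e (\<lambda>p a. ltb (a 0) (a 1)))"
lemma LTBp: "rc (\<lambda>_. True) LTBp (\<lambda>p a. ltb (a 0) (a 1))"
  unfolding LTBp_def ltb_alt by (rule someI_ex, rule exI, (rule rc_base)+)
lemma rc_ltb: "rc P g G \<Longrightarrow> rc P h H \<Longrightarrow> rc P (Cnf LTBp [g, h]) (\<lambda>p a. ltb (G p a) (H p a))"
  by (rule lift2[OF LTBp])

definition condn :: "nat \<Rightarrow> nat \<Rightarrow> nat \<Rightarrow> nat" where "condn c x y = (if c = 0 then y else x)"
lemma condn_alt: "condn c x y = x * (1 - (1 - c)) + y * (1 - c)" by (auto simp: condn_def)
definition "CONDp = (SOME e. rc (\<lambda>_. True) e (\<lambda>p a. condn (a 0) (a 1) (a 2)))"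
lemma CONDp: "rc (\<lambda>_. True) CONDp (\<lambda>p a. condn (a 0) (a 1) (a 2))"
  unfolding CONDp_def condn_alt by (rule someI_ex, rule exI, (rule rc_base)+)
lemma rc_condn: "rc P g G \<Longrightarrow> rc P h H \<Longrightarrow> rc P k K \<Longrightarrow> rc P (Cnf CONDp [g, h, k]) (\<lambda>p a. condn (G p a) (H p a) (K p a))"
  by (rule lift3[OF CONDp])

lemmas rc_b1 = rc_base rc_ltb rc_condn

definition "DIV2p = Mnf (Cnf SUBp [cprog 1, Cnf LTBp [Pf 1, Cnf ADDp [Cnf ADDp [Pf 0, Pf 0], cprog 2]]])"
lemma DIV2p: "rc P DIV2p (\<lambda>p a. a 0 div 2)"
  unfolding DIV2p_def
  apply (rule rc_search[where F="\<lambda>p b. 1 - ltb (b 1) (b 0 + b 0 + 2)"])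
    apply (rule rc_b1)+
  by (auto simp: ltb_def)
lemma rc_div2: "rc P g G \<Longrightarrow> rc P (Cnf DIV2p [g]) (\<lambda>p a. G p a div 2)"
  by (rule lift1[OF DIV2p])

lemma mod2_alt: "(n::nat) mod 2 = n - 2 * (n div 2)" using div_mult_mod_eq[of n 2] by linarith
definition "MOD2p = (SOME e. rc (\<lambda>_. True) e (\<lambda>p a. a 0 mod 2))"
lemma MOD2p: "rc (\<lambda>_. True) MOD2p (\<lambda>p a. a 0 mod 2)"
  unfolding MOD2p_def mod2_alt by (rule someI_ex, rule exI, (rule rc_base rc_div2)+)
lemma rc_mod2: "rc P g G \<Longrightarrow> rc P (Cnf MOD2p [g]) (\<lambda>p a. G p a mod 2)"
  by (rule lift1[OF MOD2p])

definition "TRIp = (SOME e. rc (\<lambda>_. True) e (\<lambda>p a. triangle (a 0)))"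
lemma TRIp: "rc (\<lambda>_. True) TRIp (\<lambda>p a. triangle (a 0))"
  unfolding TRIp_def triangle_def by (rule someI_ex, rule exI, (rule rc_base rc_div2)+)
lemma rc_tri: "rc P g G \<Longrightarrow> rc P (Cnf TRIp [g]) (\<lambda>p a. triangle (G p a))"
  by (rule lift1[OF TRIp])

definition penc :: "nat \<Rightarrow> nat \<Rightarrow> nat" where "penc x y = prod_encode (x, y)"
definition "PENCp = (SOME e. rc (\<lambda>_. True) e (\<lambda>p a. penc (a 0) (a 1)))"
lemma PENCp: "rc (\<lambda>_. True) PENCp (\<lambda>p a. penc (a 0) (a 1))"
  unfolding PENCp_def penc_def prod_encode_def by (simp, rule someI_ex, rule exI, (rule rc_base rc_tri)+)
lemma rc_penc: "rc P g G \<Longrightarrow> rc P h H \<Longrightarrow> rc P (Cnf PENCp [g, h]) (\<lambda>p a. penc (G p a) (H p a))"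
  by (rule lift2[OF PENCp])

definition psearch :: "nat \<Rightarrow> nat" where "psearch n = (LEAST s. n < triangle (Suc s))"

lemma psearch_ex: "n < triangle (Suc n)"
  by (induction n) auto

lemma psearch_bounds: "triangle (psearch n) \<le> n \<and> n < triangle (Suc (psearch n))"
proof -
  have 1: "n < triangle (Suc (psearch n))" unfolding psearch_def by (rule LeastI[of "\<lambda>s. n < triangle (Suc s)", OF psearch_ex])
  have "triangle (psearch n) \<le> n"
  proof (cases "psearch n")
    case 0 then show ?thesis by simp
  next
    case (Suc s)
    then have "s < psearch n" by simp
    then have "\<not> n < triangle (Suc s)" unfolding psearch_def by (rule not_less_Least)
    then show ?thesis using Suc by simp
  qed
  with 1 show ?thesis by blast
qed

lemma prod_decode_psearch:
  "prod_decode n = (n - triangle (psearch n), psearch n - (n - triangle (psearch n)))"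
proof -
  let ?s = "psearch n"
  have b: "triangle ?s \<le> n" "n < triangle ?s + Suc ?s" using psearch_bounds[of n] by auto
  have "prod_encode (n - triangle ?s, ?s - (n - triangle ?s)) = n"
    using b by (simp add: prod_encode_def)
  then show ?thesis by (metis prod_encode_inverse)
qed

definition "PSp = Mnf (Cnf SUBp [cprog 1, Cnf LTBp [Pf 1, Cnf TRIp [Cnf Sf [Pf 0]]]])"
lemma PSp: "rc P PSp (\<lambda>p a. psearch (a 0))"
  unfolding PSp_def
  apply (rule rc_search[where F="\<lambda>p b. 1 - ltb (b 1) (triangle (Suc (b 0)))"])
    apply (rule rc_b1 rc_tri)+
  using psearch_bounds apply (simp add: ltb_def)
  apply (simp add: ltb_def psearch_def)
  using not_less_Least by blast

definition pfst :: "nat \<Rightarrow> nat" where "pfst n = fst (prod_decode n)"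
definition psnd :: "nat \<Rightarrow> nat" where "psnd n = snd (prod_decode n)"
definition "PFSTp = (SOME e. rc (\<lambda>_. True) e (\<lambda>p a. pfst (a 0)))"
lemma PFSTp: "rc (\<lambda>_. True) PFSTp (\<lambda>p a. pfst (a 0))"
  unfolding PFSTp_def pfst_def prod_decode_psearch
  by (simp, rule someI_ex, rule exI, (rule rc_base rc_tri lift1[OF PSp])+)
definition "PSNDp = (SOME e. rc (\<lambda>_. True) e (\<lambda>p a. psnd (a 0)))"
lemma PSNDp: "rc (\<lambda>_. True) PSNDp (\<lambda>p a. psnd (a 0))"
  unfolding PSNDp_def psnd_def prod_decode_psearch
  by (simp, rule someI_ex, rule exI, (rule rc_base rc_tri lift1[OF PSp])+)
lemma rc_pfst: "rc P g G \<Longrightarrow> rc P (Cnf PFSTp [g]) (\<lambda>p a. pfst (G p a))"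
  by (rule lift1[OF PFSTp])
lemma rc_psnd: "rc P g G \<Longrightarrow> rc P (Cnf PSNDp [g]) (\<lambda>p a. psnd (G p a))"
  by (rule lift1[OF PSNDp])

lemma penc_pfst_psnd[simp]: "pfst (penc x y) = x" "psnd (penc x y) = y"
  by (auto simp: pfst_def psnd_def penc_def)

lemmas rc_b2 = rc_b1 rc_div2 rc_mod2 rc_tri rc_penc rc_pfst rc_psnd




definition ipos :: "nat \<Rightarrow> nat" where "ipos n = condn (n mod 2) 0 (n div 2)"
definition ineg :: "nat \<Rightarrow> nat" where "ineg n = condn (n mod 2) (n div 2 + 1) 0"

lemma int_decode_alt: "int_decode n = int (ipos n) - int (ineg n)"
  by (auto simp: int_decode_def sum_decode_def ipos_def ineg_def condn_def elim: oddE)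

definition ienc :: "nat \<Rightarrow> nat \<Rightarrow> nat" where
  "ienc P Q = condn (ltb P Q) (2 * (Q - P) - 1) (2 * (P - Q))"

lemma ienc_eq: "ienc P Q = int_encode (int P - int Q)"
  by (auto simp: ienc_def int_encode_def sum_encode_def condn_def ltb_def nat_diff_distrib)

definition pp :: "nat \<Rightarrow> nat" where "pp u = ipos (pfst u)"
definition nn :: "nat \<Rightarrow> nat" where "nn u = ineg (pfst u)"
definition rden :: "nat \<Rightarrow> nat" where "rden u = Suc (psnd u)"
definition rmk :: "nat \<Rightarrow> nat \<Rightarrow> nat \<Rightarrow> nat" where "rmk P Q D = penc (ienc P Q) (D - 1)"

abbreviation rv :: "nat \<Rightarrow> real" where "rv u \<equiv> rat_code u"

lemma rv_alt: "rv u = (real (pp u) - real (nn u)) / real (rden u)"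
  unfolding rat_code_def pp_def nn_def rden_def pfst_def psnd_def
  by (simp add: case_prod_beta int_decode_alt)

lemma rden_pos: "0 < rden u" by (simp add: rden_def)

lemma rv_rmk: "D > 0 \<Longrightarrow> rv (rmk P Q D) = (real P - real Q) / real D"
  unfolding rat_code_def rmk_def penc_def by (simp add: ienc_eq)

definition radd :: "nat \<Rightarrow> nat \<Rightarrow> nat" where
  "radd u v = rmk (pp u * rden v + pp v * rden u) (nn u * rden v + nn v * rden u) (rden u * rden v)"
definition rneg :: "nat \<Rightarrow> nat" where "rneg u = rmk (nn u) (pp u) (rden u)"
definition rpw :: "nat \<Rightarrow> nat" where "rpw j = rmk 1 0 (2 ^ j)"
definition rltb :: "nat \<Rightarrow> nat \<Rightarrow> nat" where
  "rltb u v = ltb (pp u * rden v + nn v * rden u) (pp v * rden u + nn u * rden v)"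
definition rleb :: "nat \<Rightarrow> nat \<Rightarrow> nat" where "rleb u v = 1 - rltb v u"

lemma rv_radd: "rv (radd u v) = rv u + rv v"
  using rden_pos[of u] rden_pos[of v]
  by (simp add: radd_def rv_rmk rv_alt[of u] rv_alt[of v] field_simps)
lemma rv_rneg: "rv (rneg u) = - rv u"
  using rden_pos[of u] by (simp add: rneg_def rv_rmk rv_alt[of u] field_simps)
lemma rv_rpw: "rv (rpw j) = (1/2) ^ j"
  by (simp add: rpw_def rv_rmk power_one_over)
lemma rltb_iff: "rltb u v = (if rv u < rv v then 1 else 0)"
proof -
  have du: "real (rden u) > 0" and dv: "real (rden v) > 0" using rden_pos by auto
  have "rv u < rv v \<longleftrightarrow> (real (pp u) - real (nn u)) * real (rden v) < (real (pp v) - real (nn v)) * real (rden u)"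
    unfolding rv_alt[of u] rv_alt[of v] using du dv by (simp add: divide_less_eq less_divide_eq field_simps)
  also have "\<dots> \<longleftrightarrow> pp u * rden v + nn v * rden u < pp v * rden u + nn u * rden v"
  proof -
    have "(real (pp u) - real (nn u)) * real (rden v) < (real (pp v) - real (nn v)) * real (rden u)
      \<longleftrightarrow> real (pp u * rden v + nn v * rden u) < real (pp v * rden u + nn u * rden v)"
      by (simp add: algebra_simps)
    then show ?thesis by linarith
  qed
  finally show ?thesis by (simp add: rltb_def ltb_def)
qed
lemma rleb_iff: "rleb u v = (if rv u \<le> rv v then 1 else 0)"
  by (auto simp: rleb_def rltb_iff)

lemmas rdefs = radd_def rneg_def rpw_def rltb_def rmk_def ienc_def pp_def nn_def rden_def ipos_def ineg_def

definition "RADDp = (SOME e. rc (\<lambda>_. True) e (\<lambda>p a. radd (a 0) (a 1)))"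
lemma RADDp: "rc (\<lambda>_. True) RADDp (\<lambda>p a. radd (a 0) (a 1))"
  unfolding RADDp_def rdefs by (rule someI_ex, rule exI, (rule rc_b2)+)
lemma rc_radd: "rc P g G \<Longrightarrow> rc P h H \<Longrightarrow> rc P (Cnf RADDp [g, h]) (\<lambda>p a. radd (G p a) (H p a))"
  by (rule lift2[OF RADDp])
definition "RLTBp = (SOME e. rc (\<lambda>_. True) e (\<lambda>p a. rltb (a 0) (a 1)))"
lemma RLTBp: "rc (\<lambda>_. True) RLTBp (\<lambda>p a. rltb (a 0) (a 1))"
  unfolding RLTBp_def rdefs by (rule someI_ex, rule exI, (rule rc_b2)+)
lemma rc_rltb: "rc P g G \<Longrightarrow> rc P h H \<Longrightarrow> rc P (Cnf RLTBp [g, h]) (\<lambda>p a. rltb (G p a) (H p a))"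
  by (rule lift2[OF RLTBp])
definition "RNEGp = (SOME e. rc (\<lambda>_. True) e (\<lambda>p a. rneg (a 0)))"
lemma RNEGp: "rc (\<lambda>_. True) RNEGp (\<lambda>p a. rneg (a 0))"
  unfolding RNEGp_def rdefs by (rule someI_ex, rule exI, (rule rc_b2)+)
lemma rc_rneg: "rc P g G \<Longrightarrow> rc P (Cnf RNEGp [g]) (\<lambda>p a. rneg (G p a))"
  by (rule lift1[OF RNEGp])
definition "RPWp = (SOME e. rc (\<lambda>_. True) e (\<lambda>p a. rpw (a 0)))"
lemma RPWp: "rc (\<lambda>_. True) RPWp (\<lambda>p a. rpw (a 0))"
  unfolding RPWp_def rdefs by (rule someI_ex, rule exI, (rule rc_b2)+)
lemma rc_rpw: "rc P g G \<Longrightarrow> rc P (Cnf RPWp [g]) (\<lambda>p a. rpw (G p a))"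
  by (rule lift1[OF RPWp])
lemma rc_rleb: "rc P g G \<Longrightarrow> rc P h H \<Longrightarrow> \<exists>e. rc P e (\<lambda>p a. rleb (G p a) (H p a))"
  unfolding rleb_def by (rule exI, (rule rc_b2 rc_rltb | assumption)+)




definition "RLEBp = (SOME e. rc (\<lambda>_. True) e (\<lambda>p a. rleb (a 0) (a 1)))"
lemma RLEBp: "rc (\<lambda>_. True) RLEBp (\<lambda>p a. rleb (a 0) (a 1))"
  unfolding RLEBp_def rleb_def by (rule someI_ex, rule exI, (rule rc_b2 rc_rltb)+)
lemma rc_rleb': "rc P g G \<Longrightarrow> rc P h H \<Longrightarrow> rc P (Cnf RLEBp [g, h]) (\<lambda>p a. rleb (G p a) (H p a))"
  by (rule lift2[OF RLEBp])

definition vhd :: "nat \<Rightarrow> nat" where "vhd c = pfst (c - 1)"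
definition ltail :: "nat \<Rightarrow> nat" where "ltail c = psnd (c - 1)"
definition vlen1b :: "nat \<Rightarrow> nat" where "vlen1b c = condn c (1 - ltail c) 0"
definition vcons :: "nat \<Rightarrow> nat \<Rightarrow> nat" where "vcons x y = Suc (penc x y)"

definition "VHDp = (SOME e. rc (\<lambda>_. True) e (\<lambda>p a. vhd (a 0)))"
lemma VHDp: "rc (\<lambda>_. True) VHDp (\<lambda>p a. vhd (a 0))"
  unfolding VHDp_def vhd_def by (rule someI_ex, rule exI, (rule rc_b2)+)
lemma rc_vhd: "rc P g G \<Longrightarrow> rc P (Cnf VHDp [g]) (\<lambda>p a. vhd (G p a))"
  by (rule lift1[OF VHDp])
definition "LTAILp = (SOME e. rc (\<lambda>_. True) e (\<lambda>p a. ltail (a 0)))"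
lemma LTAILp: "rc (\<lambda>_. True) LTAILp (\<lambda>p a. ltail (a 0))"
  unfolding LTAILp_def ltail_def by (rule someI_ex, rule exI, (rule rc_b2)+)
lemma rc_ltail: "rc P g G \<Longrightarrow> rc P (Cnf LTAILp [g]) (\<lambda>p a. ltail (G p a))"
  by (rule lift1[OF LTAILp])
definition "VLEN1p = (SOME e. rc (\<lambda>_. True) e (\<lambda>p a. vlen1b (a 0)))"
lemma VLEN1p: "rc (\<lambda>_. True) VLEN1p (\<lambda>p a. vlen1b (a 0))"
  unfolding VLEN1p_def vlen1b_def by (rule someI_ex, rule exI, (rule rc_b2 rc_ltail)+)
lemma rc_vlen1b: "rc P g G \<Longrightarrow> rc P (Cnf VLEN1p [g]) (\<lambda>p a. vlen1b (G p a))"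
  by (rule lift1[OF VLEN1p])
definition "VCONSp = (SOME e. rc (\<lambda>_. True) e (\<lambda>p a. vcons (a 0) (a 1)))"
lemma VCONSp: "rc (\<lambda>_. True) VCONSp (\<lambda>p a. vcons (a 0) (a 1))"
  unfolding VCONSp_def vcons_def by (rule someI_ex, rule exI, (rule rc_b2)+)
lemma rc_vcons: "rc P g G \<Longrightarrow> rc P h H \<Longrightarrow> rc P (Cnf VCONSp [g, h]) (\<lambda>p a. vcons (G p a) (H p a))"
  by (rule lift2[OF VCONSp])

lemmas rc_b3 = rc_b2 rc_radd rc_rltb rc_rneg rc_rpw rc_rleb' rc_vhd rc_ltail rc_vlen1b rc_vcons rc_orc

lemma list_decode_Suc': "list_decode (Suc n) = pfst n # list_decode (psnd n)"
  by (simp add: pfst_def psnd_def case_prod_beta)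

lemma list_decode_code: "list_decode c = (if c = 0 then [] else pfst (c - 1) # list_decode (ltail c))"
  by (cases c) (auto simp: ltail_def pfst_def psnd_def case_prod_beta)

lemma prod_decode_0: "prod_decode 0 = (0, 0)"
  by (simp add: prod_decode_def prod_decode_aux.simps)
lemma pfst0[simp]: "pfst 0 = 0" and psnd0[simp]: "psnd 0 = 0"
  by (auto simp: pfst_def psnd_def prod_decode_0)

lemma list_decode_eq0: "list_decode c = [] \<longleftrightarrow> c = 0"
  by (metis list_decode.simps(1) list_decode_inverse)

lemma vlen1b_iff: "vlen1b c = (if length (list_decode c) = 1 then 1 else 0)"
  using list_decode_code[of c] list_decode_eq0[of "ltail c"]
  by (auto simp: vlen1b_def condn_def)

lemma vlen1b_vec: "vlen1b c = 1 \<longleftrightarrow> length (vec_code c) = 1"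
  by (auto simp: vlen1b_iff vec_code_def)

lemma vec_code_len1: "length (vec_code c) = 1 \<Longrightarrow> vec_code c = [rv (vhd c)]"
  unfolding vec_code_def vhd_def
  using list_decode_code[of c] by (cases "c = 0") (auto simp: list_decode_eq0)

lemma vec_code_vcons: "vec_code (vcons x y) = rv x # vec_code y"
  by (simp add: vec_code_def vcons_def penc_def)

lemma vec_code_0[simp]: "vec_code 0 = []" by (simp add: vec_code_def)

lemma vhd_vcons[simp]: "vhd (vcons x y) = x" by (simp add: vhd_def vcons_def)
lemma vlen1b_vcons0: "vlen1b (vcons x 0) = 1"
  by (simp add: vlen1b_iff vcons_def penc_def)

definition ltl :: "nat \<Rightarrow> nat \<Rightarrow> nat" where "ltl l c = (ltail ^^ l) c"

lemma list_decode_ltl: "list_decode (ltl l c) = drop l (list_decode c)"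
proof (induction l)
  case 0 then show ?case by (simp add: ltl_def)
next
  case (Suc l)
  have "list_decode (ltl (Suc l) c) = list_decode (ltail (ltl l c))" by (simp add: ltl_def)
  also have "\<dots> = tl (list_decode (ltl l c))"
    using list_decode_code[of "ltl l c"] by (cases "ltl l c = 0") (auto simp: ltail_def psnd_def prod_decode_0)
  also have "\<dots> = drop (Suc l) (list_decode c)" using Suc by (simp add: drop_Suc tl_drop)
  finally show ?case .
qed

primrec LTLp :: "nat \<Rightarrow> recf" where
  "LTLp 0 = Pf 0" | "LTLp (Suc l) = Cnf LTAILp [LTLp l]"

lemma LTLp: "rc (\<lambda>_. True) (LTLp l) (\<lambda>p a. ltl l (a 0))"
proof (induction l)
  case 0 then show ?case by (simp add: ltl_def rc_Pf)
next
  case (Suc l) then show ?case using rc_ltail[OF Suc] by (simp add: ltl_def)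
qed
lemma rc_ltl: "rc P g G \<Longrightarrow> rc P (Cnf (LTLp l) [g]) (\<lambda>p a. ltl l (G p a))"
  by (rule lift1[OF LTLp])




lemma coord_le_rdist: "i < length x \<Longrightarrow> \<bar>x ! i - y ! i\<bar> \<le> rdist x y"
proof -
  assume i: "i < length x"
  have "(x ! i - y ! i)^2 \<le> (\<Sum>j<length x. (x ! j - y ! j)^2)"
    by (rule member_le_sum) (use i in auto)
  then have "sqrt ((x ! i - y ! i)^2) \<le> rdist x y" unfolding rdist_def by (rule real_sqrt_le_mono)
  then show ?thesis by simp
qed

lemma rdist_upd: "i < length c \<Longrightarrow> rdist (c[i := t]) c = \<bar>t - c ! i\<bar>"
proof -
  assume i: "i < length c"
  have "(\<Sum>j<length c. (c[i := t] ! j - c ! j)^2) = (\<Sum>j<length c. if j = i then (t - c ! i)^2 else 0)"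
    by (rule sum.cong) (auto simp: nth_list_update)
  also have "\<dots> = (t - c ! i)^2" using i by simp
  finally show ?thesis unfolding rdist_def by simp
qed

lemma rdist1: "rdist [a] [b] = \<bar>a - b\<bar>" by (simp add: rdist_def)

lemma rball1: "rball 1 [a] r = {[t] | t. \<bar>t - a\<bar> < r}"
  by (auto simp: rball_def rdist1 length_Suc_conv)
lemma rball1'[simp]: "rball (Suc 0) [a] r = {[t] | t. \<bar>t - a\<bar> < r}"
  using rball1 by simp

lemma proj_rball:
  assumes "length c = m" "i < m"
  shows "(\<lambda>y. [y ! i]) ` rball m c r = rball 1 [c ! i] r"
proof
  show "(\<lambda>y. [y ! i]) ` rball m c r \<subseteq> rball 1 [c ! i] r"
  proof
    fix z assume "z \<in> (\<lambda>y. [y ! i]) ` rball m c r"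
    then obtain y where y: "z = [y ! i]" "length y = m" "rdist y c < r" by (auto simp: rball_def)
    have "\<bar>y ! i - c ! i\<bar> \<le> rdist y c" using y assms by (intro coord_le_rdist) auto
    then show "z \<in> rball 1 [c ! i] r" using y by (auto simp: rball1)
  qed
  show "rball 1 [c ! i] r \<subseteq> (\<lambda>y. [y ! i]) ` rball m c r"
  proof
    fix z assume "z \<in> rball 1 [c ! i] r"
    then obtain t where z: "z = [t]" "\<bar>t - c ! i\<bar> < r" by (auto simp: rball1)
    have "c[i := t] \<in> rball m c r" using assms z rdist_upd[of i c t] by (auto simp: rball_def)
    moreover have "z = [c[i := t] ! i]" using assms z by simp
    ultimately show "z \<in> (\<lambda>y. [y ! i]) ` rball m c r" by blast
  qed
qed

definition bset :: "nat \<Rightarrow> nat \<Rightarrow> real list set" where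
  "bset d w = rball d (vec_code (pfst w)) (rv (psnd w))"

lemma theta_name_bset: "theta_name d p U \<longleftrightarrow> U = (\<Union>k. bset d (p k))"
  by (simp add: theta_name_def bset_def pfst_def psnd_def case_prod_beta)

definition lenb :: "nat \<Rightarrow> nat \<Rightarrow> nat" where "lenb m c = condn (ltl (m - 1) c) (1 - ltl m c) 0"
definition nthc :: "nat \<Rightarrow> nat \<Rightarrow> nat" where "nthc i c = vhd (ltl i c)"

lemma lenb_iff: "m > 0 \<Longrightarrow> lenb m c = (if length (list_decode c) = m then 1 else 0)"
  using list_decode_ltl[of "m - 1" c] list_decode_ltl[of m c] list_decode_eq0[of "ltl (m - 1) c"]
    list_decode_eq0[of "ltl m c"]
  by (auto simp: lenb_def condn_def)

lemma nthc_eq: "i < length (list_decode c) \<Longrightarrow> nthc i c = list_decode c ! i"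
proof -
  assume i: "i < length (list_decode c)"
  have "list_decode (ltl i c) = drop i (list_decode c)" by (rule list_decode_ltl)
  moreover have "drop i (list_decode c) = list_decode c ! i # drop (Suc i) (list_decode c)"
    using i by (simp add: Cons_nth_drop_Suc)
  ultimately show ?thesis
    using list_decode_code[of "ltl i c"] unfolding nthc_def vhd_def
    by (cases "ltl i c = 0") auto
qed

definition pw :: "nat \<Rightarrow> nat \<Rightarrow> nat \<Rightarrow> nat" where
  "pw m i w = condn (lenb m (pfst w)) (penc (vcons (nthc i (pfst w)) 0) (psnd w)) 0"

lemma bset_0: "bset d 0 = {}" if "d > 0"
  using that by (auto simp: bset_def rball_def)

lemma bset_pw: assumes "i < m" shows "bset 1 (pw m i w) = (\<lambda>y. [y ! i]) ` bset m w"
proof (cases "length (list_decode (pfst w)) = m")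
  case True
  then have l: "length (vec_code (pfst w)) = m" by (simp add: vec_code_def)
  have "vec_code (vcons (nthc i (pfst w)) 0) = [vec_code (pfst w) ! i]"
    using True assms by (simp add: vec_code_vcons nthc_eq) (simp add: vec_code_def)
  then show ?thesis using True assms proj_rball[OF l assms]
    by (simp add: pw_def lenb_iff condn_def bset_def)
next
  case False
  then have "bset m w = {}" by (auto simp: bset_def rball_def vec_code_def)
  then show ?thesis using False assms bset_0[of 1] by (simp add: pw_def lenb_iff condn_def)
qed

definition "PWp m i = (SOME e. rc (\<lambda>_. True) e (\<lambda>p a. pw m i (a 0)))"
lemma PWp: "rc (\<lambda>_. True) (PWp m i) (\<lambda>p a. pw m i (a 0))"
  unfolding PWp_def pw_def lenb_def nthc_def by (rule someI_ex, rule exI, (rule rc_b3 rc_ltl)+)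

lemma comp_rcont: assumes "rcont n m X f" "i < m" shows "rcont n 1 X (\<lambda>x. [f x ! i])"
  unfolding rcont_def
proof (intro conjI ballI allI impI)
  fix x \<epsilon> assume x: "x \<in> X" and e: "(\<epsilon>::real) > 0"
  from assms(1) x e obtain \<delta> where d: "\<delta> > 0" "\<forall>y\<in>X. rdist y x < \<delta> \<longrightarrow> rdist (f y) (f x) < \<epsilon>"
    unfolding rcont_def by blast
  show "\<exists>\<delta>>0. \<forall>y\<in>X. rdist y x < \<delta> \<longrightarrow> rdist [f y ! i] [f x ! i] < \<epsilon>"
  proof (intro exI conjI ballI impI)
    fix y assume y: "y \<in> X" "rdist y x < \<delta>"
    have "length (f y) = m" using assms(1) y by (auto simp: rcont_def)
    then have "\<bar>f y ! i - f x ! i\<bar> \<le> rdist (f y) (f x)" using assms(2) by (intro coord_le_rdist) auto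
    moreover have "rdist (f y) (f x) < \<epsilon>" using d y by blast
    ultimately show "rdist [f y ! i] [f x ! i] < \<epsilon>" by (simp add: rdist1)
  qed (use d in auto)
qed auto

lemma comp_eff_open: assumes "rcont n m X f" "eff_open n m X f" "i < m"
  shows "eff_open n 1 X (\<lambda>x. [f x ! i])"
  unfolding eff_open_def
proof (intro conjI allI impI)
  fix U assume U: "ropen n U \<and> U \<subseteq> X"
  then have o: "ropen m (f ` U)" using assms(2) by (auto simp: eff_open_def)
  have lenU: "\<forall>x\<in>U. length (f x) = m" using U assms(1) by (auto simp: rcont_def)
  show "ropen 1 ((\<lambda>x. [f x ! i]) ` U)"
    unfolding ropen_def
  proof (intro ballI conjI)
    fix z assume "z \<in> (\<lambda>x. [f x ! i]) ` U"
    then obtain u where u: "u \<in> U" "z = [f u ! i]" by auto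
    then show "length z = 1" by simp
    from o u obtain r where r: "r > 0" "rball m (f u) r \<subseteq> f ` U" unfolding ropen_def by blast
    have "rball 1 z r = (\<lambda>y. [y ! i]) ` rball m (f u) r"
      using proj_rball[of "f u" m i r] lenU u assms(3) by simp
    also have "\<dots> \<subseteq> (\<lambda>y. [y ! i]) ` (f ` U)" using r by auto
    finally show "\<exists>r>0. rball 1 z r \<subseteq> (\<lambda>x. [f x ! i]) ` U" using r by (auto simp: image_image)
  qed
next
  from assms(2) obtain e where e: "\<forall>p U. U \<in> {U. ropen n U \<and> U \<subseteq> X} \<longrightarrow> theta_name n p U \<longrightarrow>
      (\<exists>q. (\<forall>k. oeval p e [k] (q k)) \<and> theta_name m q (f ` U))"
    unfolding eff_open_def computable_on_def by blast
  show "computable_on (theta_name n) (theta_name 1) {U. ropen n U \<and> U \<subseteq> X} (\<lambda>U. (\<lambda>x. [f x ! i]) ` U)"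
    unfolding computable_on_def
  proof (intro exI[of _ "Cnf (PWp m i) [Cnf e [Pf 0]]"] allI impI)
    fix p U assume U: "U \<in> {U. ropen n U \<and> U \<subseteq> X}" and th: "theta_name n p U"
    from e U th obtain q where q: "\<forall>k. oeval p e [k] (q k)" "theta_name m q (f ` U)" by blast
    have ev: "oeval p (Cnf (PWp m i) [Cnf e [Pf 0]]) [k] (pw m i (q k))" for k
    proof -
      have "oeval p (Cnf e [Pf 0]) [k] (q k)"
        apply (rule oeval.comp[where ys="[k]"]) using q(1) oeval.proj[of p 0 "[k]"] by (auto simp: arg_def)
      then show ?thesis
        apply (intro oeval.comp[where ys="[q k]"]) using rcD[OF PWp[of m i], of p "[q k]"] by (auto simp: arg_def)
    qed
    have "(\<lambda>x. [f x ! i]) ` U = (\<lambda>y. [y ! i]) ` (f ` U)" by (auto simp: image_image)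
    also have "\<dots> = (\<lambda>y. [y ! i]) ` (\<Union>k. bset m (q k))" using q(2) by (simp add: theta_name_bset)
    also have "\<dots> = (\<Union>k. (\<lambda>y. [y ! i]) ` bset m (q k))" by (rule image_UN)
    also have "\<dots> = (\<Union>k. bset 1 (pw m i (q k)))" by (simp only: bset_pw[OF assms(3)])
    finally show "\<exists>q. (\<forall>n. oeval p (Cnf (PWp m i) [Cnf e [Pf 0]]) [n] (q n)) \<and>
         theta_name 1 q ((\<lambda>x. [f x ! i]) ` U)"
      using ev by (intro exI[of _ "\<lambda>k. pw m i (q k)"]) (simp add: theta_name_bset)
  qed
qed

primrec comb :: "recf list \<Rightarrow> recf" where
  "comb [] = Zf"
| "comb (e # es) = Cnf VCONSp [Cnf VHDp [Cnf e [Pf 0]], comb es]"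

lemma oeval_comb:
  assumes "\<forall>j<length es. \<forall>k. oeval p (es ! j) [k] (Q j k)"
  shows "oeval p (comb es) [k] (foldr (\<lambda>j acc. vcons (vhd (Q j k)) acc) [0..<length es] 0)"
  using assms
proof (induction es arbitrary: Q)
  case Nil then show ?case by (simp add: oeval.zero)
next
  case (Cons e es)
  have h: "\<forall>j<length es. \<forall>k. oeval p (es ! j) [k] (Q (Suc j) k)" using Cons.prems by auto
  have IH: "oeval p (comb es) [k] (foldr (\<lambda>j acc. vcons (vhd (Q (Suc j) k)) acc) [0..<length es] 0)"
    using Cons.IH[OF h] .
  have e0: "oeval p e [k] (Q 0 k)" using Cons.prems by auto
  have s1: "oeval p (Cnf e [Pf 0]) [k] (Q 0 k)"
    apply (rule oeval.comp[where ys="[k]"]) using e0 oeval.proj[of p 0 "[k]"] by (auto simp: arg_def)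
  have s2: "oeval p (Cnf VHDp [Cnf e [Pf 0]]) [k] (vhd (Q 0 k))"
    apply (rule oeval.comp[where ys="[Q 0 k]"]) using s1 rcD[OF VHDp, of p "[Q 0 k]"] by (auto simp: arg_def)
  have fe: "foldr (\<lambda>j acc. vcons (vhd (Q j k)) acc) [0..<length (e # es)] 0 =
        vcons (vhd (Q 0 k)) (foldr (\<lambda>j acc. vcons (vhd (Q (Suc j) k)) acc) [0..<length es] 0)"
    by (simp add: upt_conv_Cons map_Suc_upt[symmetric] foldr_map o_def del: upt_Suc) 
  show ?case
    unfolding fe comb.simps
    apply (rule oeval.comp[where ys="[vhd (Q 0 k), foldr (\<lambda>j acc. vcons (vhd (Q (Suc j) k)) acc) [0..<length es] 0]"])
    using s2 IH rcD[OF VCONSp, of p "[vhd (Q 0 k), foldr (\<lambda>j acc. vcons (vhd (Q (Suc j) k)) acc) [0..<length es] 0]"]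
    by (auto simp: arg_def less_Suc_eq)
qed

lemma vec_code_foldr:
  "vec_code (foldr (\<lambda>j acc. vcons (vhd (Q j)) acc) [0..<m] 0) = map (\<lambda>j. rv (vhd (Q j))) [0..<m]"
proof (induction m arbitrary: Q)
  case 0 then show ?case by simp
next
  case (Suc m)
  have "foldr (\<lambda>j acc. vcons (vhd (Q j)) acc) [0..<Suc m] 0 =
        vcons (vhd (Q 0)) (foldr (\<lambda>j acc. vcons (vhd (Q (Suc j))) acc) [0..<m] 0)"
    by (simp add: upt_conv_Cons map_Suc_upt[symmetric] foldr_map o_def del: upt_Suc)
  then show ?case using Suc[of "\<lambda>j. Q (Suc j)"]
    by (simp add: vec_code_vcons upt_conv_Cons map_Suc_upt[symmetric] del: upt_Suc)
qed

lemma comp_combine: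
  assumes "rcont n m X f" "\<forall>i<m. rcomputable n 1 X (\<lambda>x. [f x ! i])"
  shows "rcomputable n m X f"
proof -
  have "\<forall>i<m. \<exists>e. \<forall>p x. x \<in> X \<longrightarrow> cauchy_name n p x \<longrightarrow>
      (\<exists>q. (\<forall>k. oeval p e [k] (q k)) \<and> cauchy_name 1 q [f x ! i])"
    using assms(2) by (auto simp: rcomputable_def computable_on_def)
  then obtain E where E: "\<forall>i<m. \<forall>p x. x \<in> X \<longrightarrow> cauchy_name n p x \<longrightarrow>
      (\<exists>q. (\<forall>k. oeval p (E i) [k] (q k)) \<and> cauchy_name 1 q [f x ! i])"
    by metis
  show ?thesis unfolding rcomputable_def computable_on_def
  proof (intro exI[of _ "comb (map E [0..<m])"] allI impI)
    fix p x assume x: "x \<in> X" and cn: "cauchy_name n p x"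
    have "\<forall>i<m. \<exists>q. (\<forall>k. oeval p (E i) [k] (q k)) \<and> cauchy_name 1 q [f x ! i]"
      using E x cn by blast
    then obtain Q where Q: "\<forall>i<m. (\<forall>k. oeval p (E i) [k] (Q i k)) \<and> cauchy_name 1 (Q i) [f x ! i]"
      by metis
    have ev: "oeval p (comb (map E [0..<m])) [k] (foldr (\<lambda>j acc. vcons (vhd (Q j k)) acc) [0..<m] 0)" for k
      using oeval_comb[of "map E [0..<m]" p Q k] Q by simp
    have lf: "length (f x) = m" using assms(1) x by (auto simp: rcont_def)
    have "cauchy_name m (\<lambda>k. foldr (\<lambda>j acc. vcons (vhd (Q j k)) acc) [0..<m] 0) (f x)"
      unfolding cauchy_name_def
    proof (intro conjI allI impI)
      fix k
      show "length (vec_code (foldr (\<lambda>j acc. vcons (vhd (Q j k)) acc) [0..<m] 0)) = m"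
        by (simp add: vec_code_foldr)
      fix i assume i: "i < m"
      have c: "length (vec_code (Q i k)) = 1" "\<bar>vec_code (Q i k) ! 0 - f x ! i\<bar> \<le> (1/2)^k"
        using Q i unfolding cauchy_name_def by auto
      show "\<bar>vec_code (foldr (\<lambda>j acc. vcons (vhd (Q j k)) acc) [0..<m] 0) ! i - f x ! i\<bar> \<le> (1/2)^k"
        using c vec_code_len1[OF c(1)] i by (simp add: vec_code_foldr)
    qed (use lf in auto)
    then show "\<exists>q. (\<forall>k. oeval p (comb (map E [0..<m])) [k] (q k)) \<and> cauchy_name m q (f x)"
      using ev by (intro exI[of _ "\<lambda>k. foldr (\<lambda>j acc. vcons (vhd (Q j k)) acc) [0..<m] 0"] conjI allI) auto
  qed
qed

lemma partb:
  assumes "rcont n m X f" "eff_open n m X f" "\<not> rcomputable n m X f"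
  shows "\<exists>i<m. rcont n 1 X (\<lambda>x. [f x ! i]) \<and> eff_open n 1 X (\<lambda>x. [f x ! i])
                        \<and> \<not> rcomputable n 1 X (\<lambda>x. [f x ! i])"
  using comp_combine[OF assms(1)] assms comp_rcont comp_eff_open by blast




lemma open_img_pt:
  fixes A :: "real set"
  assumes "open A" "a \<in> A"
  obtains e where "e > 0" "\<And>y. \<bar>y - a\<bar> < e \<Longrightarrow> y \<in> A"
  using assms unfolding open_dist dist_real_def by blast

lemma inj_open:
  fixes g :: "real \<Rightarrow> real"
  assumes cont: "continuous_on S g" and op: "\<And>U. open U \<Longrightarrow> U \<subseteq> S \<Longrightarrow> open (g ` U)"
    and st: "s < t" "{s..t} \<subseteq> S"
  shows "g s \<noteq> g t"
proof
  assume eq: "g s = g t"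
  have c: "continuous_on {s..t} g" using cont st(2) by (rule continuous_on_subset)
  have ne: "{s..t} \<noteq> {}" using st(1) by simp
  from continuous_attains_sup[OF compact_Icc ne c] obtain M where
    M: "M \<in> {s..t}" "\<forall>y\<in>{s..t}. g y \<le> g M" by blast
  from continuous_attains_inf[OF compact_Icc ne c] obtain m where
    m: "m \<in> {s..t}" "\<forall>y\<in>{s..t}. g m \<le> g y" by blast
  have "{s<..<t} \<subseteq> S" using st(2) by auto
  then have oi: "open (g ` {s<..<t})" using op[of "{s<..<t}"] by auto
  show False
  proof (cases "g M = g s \<and> g m = g s")
    case True
    have "g ` {s<..<t} = {g s}"
    proof
      show "g ` {s<..<t} \<subseteq> {g s}"
      proof
        fix z assume "z \<in> g ` {s<..<t}"
        then obtain y where y: "y \<in> {s<..<t}" "z = g y" by blast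
        then have "y \<in> {s..t}" by simp
        then have "g y \<le> g M" "g m \<le> g y" using M(2) m(2) by blast+
        then show "z \<in> {g s}" using True y by simp
      qed
      have "(s + t) / 2 \<in> {s<..<t}" using st(1) by simp
      moreover have "g ((s + t) / 2) = g s"
      proof -
        have "(s + t) / 2 \<in> {s..t}" using st(1) by simp
        then have "g ((s + t) / 2) \<le> g M" "g m \<le> g ((s + t) / 2)" using M(2) m(2) by blast+
        then show ?thesis using True by simp
      qed
      ultimately show "{g s} \<subseteq> g ` {s<..<t}" by (metis empty_subsetI image_eqI insert_subset)
    qed
    then show False using oi not_open_singleton by metis
  next
    case False
    then consider (a) "g M \<noteq> g s" | (b) "g m \<noteq> g s" by blast
    then show False
    proof cases
      case a
      note nM = a
      have "M \<noteq> s" "M \<noteq> t" using nM eq by auto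
      then have Mi: "M \<in> {s<..<t}" using M(1) by simp
      then have "g M \<in> g ` {s<..<t}" by (rule imageI)
      then obtain e where e: "e > 0" "\<And>y. \<bar>y - g M\<bar> < e \<Longrightarrow> y \<in> g ` {s<..<t}"
        using open_img_pt[OF oi] by blast
      have "\<bar>(g M + e/2) - g M\<bar> < e" using e(1) by simp
      then have "g M + e/2 \<in> g ` {s<..<t}" by (rule e(2))
      then obtain y where y: "y \<in> {s<..<t}" "g M + e/2 = g y" by blast
      then have "y \<in> {s..t}" by simp
      then have "g y \<le> g M" using M(2) by blast
      then show False using y(2) e(1) by simp
    next
      case b
      note nm = b
      have "m \<noteq> s" "m \<noteq> t" using nm eq by auto
      then have mi: "m \<in> {s<..<t}" using m(1) by simp
      then have "g m \<in> g ` {s<..<t}" by (rule imageI)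
      then obtain e where e: "e > 0" "\<And>y. \<bar>y - g m\<bar> < e \<Longrightarrow> y \<in> g ` {s<..<t}"
        using open_img_pt[OF oi] by blast
      have "\<bar>(g m - e/2) - g m\<bar> < e" using e(1) by simp
      then have "g m - e/2 \<in> g ` {s<..<t}" by (rule e(2))
      then obtain y where y: "y \<in> {s<..<t}" "g m - e/2 = g y" by blast
      then have "y \<in> {s..t}" by simp
      then have "g m \<le> g y" using m(2) by blast
      then show False using y(2) e(1) by simp
    qed
  qed
qed

lemma mono3:
  fixes g :: "real \<Rightarrow> real"
  assumes cont: "continuous_on S g" and op: "\<And>U. open U \<Longrightarrow> U \<subseteq> S \<Longrightarrow> open (g ` U)"
    and abx: "a < x" "x < b" "{a..b} \<subseteq> S"
  shows "(g a < g x \<and> g x < g b) \<or> (g b < g x \<and> g x < g a)"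
proof (rule continuous_inj_imp_mono[OF abx(1,2)])
  show "continuous_on {a..b} g" using cont abx(3) by (rule continuous_on_subset)
  show "inj_on g {a..b}"
  proof (rule inj_onI)
    fix u v assume uv: "u \<in> {a..b}" "v \<in> {a..b}" "g u = g v"
    show "u = v"
    proof (rule ccontr)
      assume "u \<noteq> v"
      then consider "u < v" | "v < u" by linarith
      then show False
      proof cases
        case 1
        have "{u..v} \<subseteq> {a..b}" using uv by auto
        then have "{u..v} \<subseteq> S" using abx(3) by (rule subset_trans)
        from inj_open[OF cont op 1 this] uv(3) show False by simp
      next
        case 2
        have "{v..u} \<subseteq> {a..b}" using uv by auto
        then have "{v..u} \<subseteq> S" using abx(3) by (rule subset_trans)
        from inj_open[OF cont op 2 this] uv(3) show False by simp
      qed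
    qed
  qed
qed

lemma side:
  fixes g :: "real \<Rightarrow> real"
  assumes cont: "continuous_on S g" and op: "\<And>U. open U \<Longrightarrow> U \<subseteq> S \<Longrightarrow> open (g ` U)"
    and t12: "t1 < x0" "x0 < t2" "{t1..t2} \<subseteq> S"
  shows "\<And>t. t < x0 \<Longrightarrow> {t..x0} \<subseteq> S \<Longrightarrow> (g t < g x0 \<longleftrightarrow> g t1 < g x0)"
    and "\<And>t. x0 < t \<Longrightarrow> {x0..t} \<subseteq> S \<Longrightarrow> (g x0 < g t \<longleftrightarrow> g t1 < g x0)"
proof -
  have base: "(g t1 < g x0 \<and> g x0 < g t2) \<or> (g t2 < g x0 \<and> g x0 < g t1)"
    by (rule mono3[OF cont op t12])
  fix t assume t: "t < x0" "{t..x0} \<subseteq> S"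
  have "{t..t2} \<subseteq> S"
  proof
    fix y assume "y \<in> {t..t2}"
    then show "y \<in> S" using t t12 by (cases "y \<le> x0") auto
  qed
  then have "(g t < g x0 \<and> g x0 < g t2) \<or> (g t2 < g x0 \<and> g x0 < g t)"
    using mono3[OF cont op t(1) t12(2)] by simp
  then show "g t < g x0 \<longleftrightarrow> g t1 < g x0" using base by auto
next
  have base: "(g t1 < g x0 \<and> g x0 < g t2) \<or> (g t2 < g x0 \<and> g x0 < g t1)"
    by (rule mono3[OF cont op t12])
  fix t assume t: "x0 < t" "{x0..t} \<subseteq> S"
  have "{t1..t} \<subseteq> S"
  proof
    fix y assume "y \<in> {t1..t}"
    then show "y \<in> S" using t t12 by (cases "y \<le> x0") auto
  qed
  then have "(g t1 < g x0 \<and> g x0 < g t) \<or> (g t < g x0 \<and> g x0 < g t1)"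
    using mono3[OF cont op t12(1) t(1)] by simp
  then show "g x0 < g t \<longleftrightarrow> g t1 < g x0" using base by auto
qed

lemma rat_code_surj: "(q::real) \<in> \<rat> \<Longrightarrow> \<exists>u. rv u = q"
proof -
  assume "q \<in> \<rat>"
  then obtain a b where ab: "b > 0" "q = of_int a / of_int b" by (auto elim: Rats_cases')
  have 1: "Suc (nat b - 1) = nat b" using ab by simp
  have 2: "real (nat b) = of_int b" using ab by simp
  have "rv (prod_encode (int_encode a, nat b - 1)) = q"
    using ab 1 2 by (simp add: rat_code_def del: of_nat_Suc)
  then show ?thesis by blast
qed

lemma continuous_on_epsd:
  fixes g :: "real \<Rightarrow> real"
  assumes "\<And>x e. x \<in> S \<Longrightarrow> e > 0 \<Longrightarrow> \<exists>d>0. \<forall>y\<in>S. \<bar>y - x\<bar> < d \<longrightarrow> \<bar>g y - g x\<bar> < e"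
  shows "continuous_on S g"
  unfolding continuous_on_def tendsto_iff eventually_at dist_real_def
proof (intro ballI allI impI)
  fix x e assume "x \<in> S" "(e::real) > 0"
  then obtain d where "d > 0" "\<forall>y\<in>S. \<bar>y - x\<bar> < d \<longrightarrow> \<bar>g y - g x\<bar> < e" using assms by blast
  then show "\<exists>d>0. \<forall>y\<in>S. y \<noteq> x \<and> \<bar>y - x\<bar> < d \<longrightarrow> \<bar>g y - g x\<bar> < e" by blast
qed




abbreviation hh :: "nat \<Rightarrow> real" where "hh j \<equiv> (1/2) ^ j"

lemma bset1: "bset 1 w = (if vlen1b (pfst w) = 1 then {[t] | t. \<bar>t - rv (vhd (pfst w))\<bar> < rv (psnd w)} else {})"
proof (cases "vlen1b (pfst w) = 1")
  case True
  then have "vec_code (pfst w) = [rv (vhd (pfst w))]" using vlen1b_vec vec_code_len1 by blast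
  then show ?thesis using True by (simp add: bset_def rball1)
next
  case False
  then have "length (vec_code (pfst w)) \<noteq> 1" using vlen1b_vec by blast
  then show ?thesis using False by (auto simp: bset_def rball_def)
qed

lemma setl: "{[t] | t. P t} = (\<lambda>t. [t]) ` {t. P t}" by auto

lemma ropen1_img: "ropen 1 ((\<lambda>t. [t]) ` A) \<longleftrightarrow> open A"
proof
  assume o: "ropen 1 ((\<lambda>t. [t]) ` A)"
  show "open A" unfolding open_dist dist_real_def
  proof
    fix a assume "a \<in> A"
    then obtain r where r: "r > 0" "rball 1 [a] r \<subseteq> (\<lambda>t. [t]) ` A" using o unfolding ropen_def by blast
    have "\<forall>y. \<bar>y - a\<bar> < r \<longrightarrow> y \<in> A"
    proof (intro allI impI)
      fix y assume "\<bar>y - a\<bar> < r"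
      then have "[y] \<in> rball 1 [a] r" by (simp add: rball1)
      then show "y \<in> A" using r by auto
    qed
    then show "\<exists>e>0. \<forall>y. \<bar>y - a\<bar> < e \<longrightarrow> y \<in> A" using r by blast
  qed
next
  assume o: "open A"
  show "ropen 1 ((\<lambda>t. [t]) ` A)" unfolding ropen_def
  proof
    fix x assume "x \<in> (\<lambda>t. [t]) ` A"
    then obtain a where a: "a \<in> A" "x = [a]" by auto
    obtain e where e: "e > 0" "\<And>y. \<bar>y - a\<bar> < e \<Longrightarrow> y \<in> A" using open_img_pt[OF o a(1)] by blast
    have "rball 1 x e \<subseteq> (\<lambda>t. [t]) ` A" using a e by (auto simp: rball1)
    then show "length x = 1 \<and> (\<exists>r>0. rball 1 x r \<subseteq> (\<lambda>t. [t]) ` A)" using a e by auto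
  qed
qed

lemma ropen_Union: "(\<And>U. U \<in> A \<Longrightarrow> ropen d U) \<Longrightarrow> ropen d (\<Union>A)"
  unfolding ropen_def by blast

lemma ropen_bset1: "ropen 1 (bset 1 w)"
proof -
  have "{[t] | t. \<bar>t - c\<bar> < r} = (\<lambda>t. [t]) ` {c - r <..< c + r}" for c r :: real
    by (auto simp: abs_less_iff)
  then have "bset 1 w = (if vlen1b (pfst w) = 1 then (\<lambda>t. [t]) ` {rv (vhd (pfst w)) - rv (psnd w) <..< rv (vhd (pfst w)) + rv (psnd w)} else {})"
    unfolding bset1 by presburger
  moreover have "ropen 1 ((\<lambda>t. [t]) ` {a <..< b})" for a b :: real
    unfolding ropen1_img by simp
  moreover have "ropen 1 {}" by (simp add: ropen_def)
  ultimately show ?thesis by simp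
qed

lemma endpoint_lt:
  fixes c r G :: real
  assumes "r > 0" "\<And>y. \<bar>y - c\<bar> < r \<Longrightarrow> y < G"
  shows "c + r \<le> G" "c - r \<le> G"
proof -
  have "c < G" using assms by simp
  show "c + r \<le> G"
  proof (rule ccontr)
    assume "\<not> c + r \<le> G"
    then have "\<bar>G - c\<bar> < r" using \<open>c < G\<close> by simp
    then show False using assms(2)[of G] by simp
  qed
  then show "c - r \<le> G" using assms(1) by simp
qed

lemma endpoint_gt:
  fixes c r G :: real
  assumes "r > 0" "\<And>y. \<bar>y - c\<bar> < r \<Longrightarrow> G < y"
  shows "G \<le> c - r" "G \<le> c + r"
proof -
  have "G < c" using assms by simp
  show "G \<le> c - r"
  proof (rule ccontr)
    assume "\<not> G \<le> c - r"
    then have "\<bar>G - c\<bar> < r" using \<open>G < c\<close> by simp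
    then show False using assms(2)[of G] by simp
  qed
  then show "G \<le> c + r" using assms(1) by simp
qed

lemma rv0[simp]: "rv 0 = 0"
  by (simp add: rat_code_def prod_decode_0 int_decode_def sum_decode_def)

locale A_setup =
  fixes X :: "real list set" and f :: "real list \<Rightarrow> real list" and pX :: "nat \<Rightarrow> nat" and eX e :: recf
  assumes pXc: "\<forall>n. oeval (\<lambda>_. 0) eX [n] (pX n)"
    and Xn: "theta_name 1 pX X"
    and fc: "rcont 1 1 X f"
    and fo: "\<forall>U. ropen 1 U \<and> U \<subseteq> X \<longrightarrow> ropen 1 (f ` U)"
    and fe: "\<forall>p U. U \<in> {U. ropen 1 U \<and> U \<subseteq> X} \<longrightarrow> theta_name 1 p U \<longrightarrow>
              (\<exists>q. (\<forall>n. oeval p e [n] (q n)) \<and> theta_name 1 q (f ` U))"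
begin

definition "PXp = Cnf (osubst Zf eX) [Pf 0]"
lemma PXp: "rc (\<lambda>_. True) PXp (\<lambda>p a. pX (a 0))"
  unfolding rc_def PXp_def
proof (intro allI impI)
  fix p xs
  have "oeval p (osubst Zf eX) [arg xs 0] (pX (arg xs 0))"
    using oeval_subst[of "\<lambda>_. 0" eX "[arg xs 0]" "pX (arg xs 0)" p Zf] pXc oeval.zero by blast
  then show "oeval p (Cnf (osubst Zf eX) [Pf 0]) xs (pX (arg xs 0))"
    using oeval.comp[of "[arg xs 0]" "[Pf 0]" p xs] oeval.proj[of p 0 xs] by auto
qed
lemma rc_pX: "rc P g G \<Longrightarrow> rc P (Cnf PXp [g]) (\<lambda>p a. pX (G p a))"
  by (rule lift1[OF PXp])

definition "S = {t. [t] \<in> X}"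
definition "g t = f [t] ! 0"
definition "cx k = rv (vhd (pfst (pX k)))"
definition "rx k = rv (psnd (pX k))"
definition "vX k \<longleftrightarrow> vlen1b (pfst (pX k)) = 1"
definition "dv w = rv (vhd (pfst w))"
definition "sv w = rv (psnd w)"
definition "vw w \<longleftrightarrow> vlen1b (pfst w) = 1"
definition "xv p j = rv (vhd (p j))"

lemma bset1': "bset 1 w = (if vw w then {[t] | t. \<bar>t - dv w\<bar> < sv w} else {})"
  using bset1 by (simp add: vw_def dv_def sv_def)

lemma X_eq: "X = (\<Union>k. bset 1 (pX k))" using Xn by (simp add: theta_name_bset)

lemma memX: "z \<in> X \<longleftrightarrow> (\<exists>t k. z = [t] \<and> vX k \<and> \<bar>t - cx k\<bar> < rx k)"
  unfolding X_eq using bset1 by (auto simp: vX_def cx_def rx_def)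

lemma f1: "[t] \<in> X \<Longrightarrow> f [t] = [g t]"
proof -
  assume "[t] \<in> X"
  then have "length (f [t]) = 1" using fc by (auto simp: rcont_def)
  then show ?thesis unfolding g_def by (cases "f [t]") auto
qed

lemma g_cont: "continuous_on S g"
proof (rule continuous_on_epsd)
  fix x e assume x: "x \<in> S" and e: "(e::real) > 0"
  then obtain d where d: "d > 0" "\<forall>y\<in>X. rdist y [x] < d \<longrightarrow> rdist (f y) (f [x]) < e"
    using fc unfolding rcont_def S_def by blast
  show "\<exists>d>0. \<forall>y\<in>S. \<bar>y - x\<bar> < d \<longrightarrow> \<bar>g y - g x\<bar> < e"
  proof (intro exI conjI ballI impI)
    fix y assume y: "y \<in> S" "\<bar>y - x\<bar> < d"
    then have "rdist (f [y]) (f [x]) < e" using d by (auto simp: S_def rdist1)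
    then show "\<bar>g y - g x\<bar> < e" using f1 x y by (auto simp: S_def rdist1)
  qed (use d in auto)
qed

lemma g_open: "open U \<Longrightarrow> U \<subseteq> S \<Longrightarrow> open (g ` U)"
proof -
  assume U: "open U" "U \<subseteq> S"
  have "ropen 1 ((\<lambda>t. [t]) ` U)" using U ropen1_img by blast
  moreover have "(\<lambda>t. [t]) ` U \<subseteq> X" using U by (auto simp: S_def)
  ultimately have "ropen 1 (f ` (\<lambda>t. [t]) ` U)" using fo by blast
  moreover have "f ` (\<lambda>t. [t]) ` U = (\<lambda>t. [t]) ` (g ` U)"
    using U f1 by (force simp: S_def image_image)
  ultimately show ?thesis using ropen1_img by simp
qed

end



lemmas ropen_bset1S = ropen_bset1[simplified]

context A_setup begin

lemmas bset1'S = bset1'[simplified]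

definition "cLn p w k j = vlen1b (pfst (pX k)) *
   rltb (radd (vhd (pfst (pX k))) (rneg (psnd (pX k)))) (radd (vhd (p j)) (rneg (rpw j))) *
   rltb (radd (vhd (p j)) (rpw j)) (radd (vhd (pfst (pX k))) (psnd (pX k))) *
   rleb (radd (vhd (pfst (pX k))) (rneg (psnd (pX k)))) (radd (vhd (pfst w)) (rneg (psnd w))) *
   rleb (radd (vhd (pfst w)) (psnd w)) (radd (vhd (p j)) (rneg (rpw j)))"
definition "cRn p w k j = vlen1b (pfst (pX k)) *
   rltb (radd (vhd (pfst (pX k))) (rneg (psnd (pX k)))) (radd (vhd (p j)) (rneg (rpw j))) *
   rltb (radd (vhd (p j)) (rpw j)) (radd (vhd (pfst (pX k))) (psnd (pX k))) *
   rleb (radd (vhd (p j)) (rpw j)) (radd (vhd (pfst w)) (rneg (psnd w))) *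
   rleb (radd (vhd (pfst w)) (psnd w)) (radd (vhd (pfst (pX k))) (psnd (pX k)))"

definition "CL p w k j \<longleftrightarrow> vX k \<and> cx k - rx k < xv p j - hh j \<and> xv p j + hh j < cx k + rx k \<and>
   cx k - rx k \<le> dv w - sv w \<and> dv w + sv w \<le> xv p j - hh j"
definition "CR p w k j \<longleftrightarrow> vX k \<and> cx k - rx k < xv p j - hh j \<and> xv p j + hh j < cx k + rx k \<and>
   xv p j + hh j \<le> dv w - sv w \<and> dv w + sv w \<le> cx k + rx k"

lemma cLn_iff: "cLn p w k j = (if CL p w k j then 1 else 0)"
  unfolding cLn_def CL_def
  by (simp add: rltb_iff rleb_iff rv_radd rv_rneg rv_rpw vX_def cx_def rx_def dv_def sv_def xv_def vlen1b_iff)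
lemma cRn_iff: "cRn p w k j = (if CR p w k j then 1 else 0)"
  unfolding cRn_def CR_def
  by (simp add: rltb_iff rleb_iff rv_radd rv_rneg rv_rpw vX_def cx_def rx_def dv_def sv_def xv_def vlen1b_iff)

definition "qL p t = condn (cLn p (pfst t) (pfst (psnd t)) (psnd (psnd t))) (pfst t) 0"
definition "qR p t = condn (cRn p (pfst t) (pfst (psnd t)) (psnd (psnd t))) (pfst t) 0"
definition "UL p = (\<Union>t. bset 1 (qL p t))"
definition "UR p = (\<Union>t. bset 1 (qR p t))"

lemma UL_mem: "z \<in> UL p \<longleftrightarrow> (\<exists>w k j. CL p w k j \<and> z \<in> bset 1 w)"
proof
  assume "z \<in> UL p"
  then obtain t where "z \<in> bset 1 (qL p t)" unfolding UL_def by blast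
  then show "\<exists>w k j. CL p w k j \<and> z \<in> bset 1 w"
    using bset_0[of 1] by (auto simp: qL_def condn_def cLn_iff split: if_splits)
next
  assume "\<exists>w k j. CL p w k j \<and> z \<in> bset 1 w"
  then obtain w k j where "CL p w k j" "z \<in> bset 1 w" by blast
  then have "z \<in> bset 1 (qL p (penc w (penc k j)))" by (simp add: qL_def condn_def cLn_iff)
  then show "z \<in> UL p" unfolding UL_def by blast
qed

lemma UR_mem: "z \<in> UR p \<longleftrightarrow> (\<exists>w k j. CR p w k j \<and> z \<in> bset 1 w)"
proof
  assume "z \<in> UR p"
  then obtain t where "z \<in> bset 1 (qR p t)" unfolding UR_def by blast
  then show "\<exists>w k j. CR p w k j \<and> z \<in> bset 1 w"
    using bset_0[of 1] by (auto simp: qR_def condn_def cRn_iff split: if_splits)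
next
  assume "\<exists>w k j. CR p w k j \<and> z \<in> bset 1 w"
  then obtain w k j where "CR p w k j" "z \<in> bset 1 w" by blast
  then have "z \<in> bset 1 (qR p (penc w (penc k j)))" by (simp add: qR_def condn_def cRn_iff)
  then show "z \<in> UR p" unfolding UR_def by blast
qed

lemma UL_open: "ropen 1 (UL p)"
  unfolding UL_def by (rule ropen_Union) (auto intro: ropen_bset1S)
lemma UR_open: "ropen 1 (UR p)"
  unfolding UR_def by (rule ropen_Union) (auto intro: ropen_bset1S)

lemma bset_mem: "z \<in> bset 1 w \<Longrightarrow> \<exists>t. z = [t] \<and> vw w \<and> \<bar>t - dv w\<bar> < sv w"
  using bset1' by (auto split: if_splits)

lemma w_exists:
  assumes "\<alpha> < \<beta>"
  obtains w where "vw w" "\<alpha> \<le> dv w - sv w" "dv w + sv w \<le> \<beta>" "\<alpha> < dv w" "dv w < \<beta>" "[dv w] \<in> bset 1 w"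
proof -
  obtain d where d: "d \<in> \<rat>" "\<alpha> < d" "d < \<beta>" using Rats_dense_in_real[OF assms] by blast
  have "0 < min (d - \<alpha>) (\<beta> - d)" using d by simp
  then obtain s where s: "s \<in> \<rat>" "0 < s" "s < min (d - \<alpha>) (\<beta> - d)" using Rats_dense_in_real by blast
  obtain dc where dc: "rv dc = d" using rat_code_surj[OF d(1)] by blast
  obtain sc where sc: "rv sc = s" using rat_code_surj[OF s(1)] by blast
  let ?w = "penc (vcons dc 0) sc"
  have v: "vw ?w" "dv ?w = d" "sv ?w = s" using dc sc by (auto simp: vw_def dv_def sv_def vlen1b_vcons0)
  show ?thesis
    apply (rule that[of ?w])
    using v d s by (auto simp: bset1'S)
qed

context
  fixes p x0
  assumes x0X: "[x0] \<in> X" and xv: "\<forall>j. \<bar>xv p j - x0\<bar> \<le> hh j"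
begin

lemma UL1: "z \<in> UL p \<Longrightarrow> \<exists>t k. z = [t] \<and> vX k \<and> cx k - rx k < t \<and> t < x0 \<and> \<bar>x0 - cx k\<bar> < rx k"
proof -
  assume "z \<in> UL p"
  then obtain w k j where c: "CL p w k j" "z \<in> bset 1 w" using UL_mem by blast
  then obtain t where t: "z = [t]" "vw w" "\<bar>t - dv w\<bar> < sv w" using bset_mem by blast
  have "\<bar>xv p j - x0\<bar> \<le> hh j" using xv by blast
  then show ?thesis using c(1) t unfolding CL_def by (intro exI[of _ t] exI[of _ k]) (auto simp: abs_less_iff abs_le_iff)
qed

lemma UR1: "z \<in> UR p \<Longrightarrow> \<exists>t k. z = [t] \<and> vX k \<and> x0 < t \<and> t < cx k + rx k \<and> \<bar>x0 - cx k\<bar> < rx k"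
proof -
  assume "z \<in> UR p"
  then obtain w k j where c: "CR p w k j" "z \<in> bset 1 w" using UR_mem by blast
  then obtain t where t: "z = [t]" "vw w" "\<bar>t - dv w\<bar> < sv w" using bset_mem by blast
  have "\<bar>xv p j - x0\<bar> \<le> hh j" using xv by blast
  then show ?thesis using c(1) t unfolding CR_def by (intro exI[of _ t] exI[of _ k]) (auto simp: abs_less_iff abs_le_iff)
qed

lemma UL_seg: "[t] \<in> UL p \<Longrightarrow> t < x0 \<and> {t..x0} \<subseteq> S"
proof -
  assume "[t] \<in> UL p"
  then obtain k where k: "vX k" "cx k - rx k < t" "t < x0" "\<bar>x0 - cx k\<bar> < rx k" using UL1 by blast
  have "{t..x0} \<subseteq> S"
  proof
    fix y assume "y \<in> {t..x0}"
    then have "\<bar>y - cx k\<bar> < rx k" using k by (auto simp: abs_less_iff)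
    then show "y \<in> S" using k(1) memX by (auto simp: S_def)
  qed
  then show ?thesis using k by blast
qed

lemma UR_seg: "[t] \<in> UR p \<Longrightarrow> x0 < t \<and> {x0..t} \<subseteq> S"
proof -
  assume "[t] \<in> UR p"
  then obtain k where k: "vX k" "x0 < t" "t < cx k + rx k" "\<bar>x0 - cx k\<bar> < rx k" using UR1 by blast
  have "{x0..t} \<subseteq> S"
  proof
    fix y assume "y \<in> {x0..t}"
    then have "\<bar>y - cx k\<bar> < rx k" using k by (auto simp: abs_less_iff)
    then show "y \<in> S" using k(1) memX by (auto simp: S_def)
  qed
  then show ?thesis using k by blast
qed

lemma UL_sub: "UL p \<subseteq> X"
proof
  fix z assume "z \<in> UL p"
  then obtain t k where k: "z = [t]" "vX k" "cx k - rx k < t" "t < x0" "\<bar>x0 - cx k\<bar> < rx k" using UL1 by blast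
  then have "\<bar>t - cx k\<bar> < rx k" by (auto simp: abs_less_iff)
  then show "z \<in> X" using k memX by blast
qed

lemma UR_sub: "UR p \<subseteq> X"
proof
  fix z assume "z \<in> UR p"
  then obtain t k where k: "z = [t]" "vX k" "x0 < t" "t < cx k + rx k" "\<bar>x0 - cx k\<bar> < rx k" using UR1 by blast
  then have "\<bar>t - cx k\<bar> < rx k" by (auto simp: abs_less_iff)
  then show "z \<in> X" using k memX by blast
qed

lemma small_j:
  assumes "\<eta> > 0" obtains j where "2 * hh j < \<eta>"
proof -
  obtain j where "(1/2::real) ^ j < \<eta> / 2" using real_arch_pow_inv[of "\<eta>/2" "1/2"] assms by auto
  then show ?thesis using that[of j] by (simp add: mult.commute)
qed

lemma UL2: "\<epsilon> > 0 \<Longrightarrow> \<exists>t. [t] \<in> UL p \<and> x0 - \<epsilon> < t"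
proof -
  assume e: "\<epsilon> > 0"
  obtain t0 k where k: "[x0] = [t0]" "vX k" "\<bar>t0 - cx k\<bar> < rx k" using x0X memX by blast
  then have k': "\<bar>x0 - cx k\<bar> < rx k" by simp
  define \<eta> where "\<eta> = min \<epsilon> (min (x0 - (cx k - rx k)) (cx k + rx k - x0))"
  have "\<eta> > 0" using e k' by (auto simp: \<eta>_def abs_less_iff)
  then obtain j where j: "2 * hh j < \<eta>" by (rule small_j)
  have xj: "\<bar>xv p j - x0\<bar> \<le> hh j" using xv by blast
  let ?\<alpha> = "max (cx k - rx k) (x0 - \<epsilon>)" and ?\<beta> = "xv p j - hh j"
  have ab: "?\<alpha> < ?\<beta>" using j xj by (auto simp: \<eta>_def abs_le_iff)
  obtain w where w: "vw w" "?\<alpha> \<le> dv w - sv w" "dv w + sv w \<le> ?\<beta>" "?\<alpha> < dv w" "[dv w] \<in> bset 1 w"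
    using w_exists[OF ab] by blast
  have "CL p w k j" unfolding CL_def using k(2) w j xj ab by (auto simp: \<eta>_def abs_le_iff)
  then have "[dv w] \<in> UL p" using w(5) UL_mem by blast
  then show ?thesis using w(4) by auto
qed

lemma UR2: "\<epsilon> > 0 \<Longrightarrow> \<exists>t. [t] \<in> UR p \<and> t < x0 + \<epsilon>"
proof -
  assume e: "\<epsilon> > 0"
  obtain t0 k where k: "[x0] = [t0]" "vX k" "\<bar>t0 - cx k\<bar> < rx k" using x0X memX by blast
  then have k': "\<bar>x0 - cx k\<bar> < rx k" by simp
  define \<eta> where "\<eta> = min \<epsilon> (min (x0 - (cx k - rx k)) (cx k + rx k - x0))"
  have "\<eta> > 0" using e k' by (auto simp: \<eta>_def abs_less_iff)
  then obtain j where j: "2 * hh j < \<eta>" by (rule small_j)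
  have xj: "\<bar>xv p j - x0\<bar> \<le> hh j" using xv by blast
  let ?\<alpha> = "xv p j + hh j" and ?\<beta> = "min (cx k + rx k) (x0 + \<epsilon>)"
  have ab: "?\<alpha> < ?\<beta>" using j xj by (auto simp: \<eta>_def abs_le_iff)
  obtain w where w: "vw w" "?\<alpha> \<le> dv w - sv w" "dv w + sv w \<le> ?\<beta>" "dv w < ?\<beta>" "[dv w] \<in> bset 1 w"
    using w_exists[OF ab] by blast
  have "CR p w k j" unfolding CR_def using k(2) w j xj ab by (auto simp: \<eta>_def abs_le_iff)
  then have "[dv w] \<in> UR p" using w(5) UR_mem by blast
  then show ?thesis using w(4) by auto
qed

end
end



context A_setup begin

definition "Pa p \<longleftrightarrow> (\<exists>x\<in>X. cauchy_name 1 p x)"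

lemma cauchy1: "cauchy_name 1 p x \<Longrightarrow> \<exists>x0. x = [x0] \<and> (\<forall>j. \<bar>xv p j - x0\<bar> \<le> hh j)"
proof -
  assume c: "cauchy_name 1 p x"
  then have l: "length x = 1" by (simp add: cauchy_name_def)
  then obtain x0 where x0: "x = [x0]" by (cases x) auto
  have "\<bar>xv p j - x0\<bar> \<le> hh j" for j
  proof -
    have l: "length (vec_code (p j)) = 1" and b: "\<bar>vec_code (p j) ! 0 - x ! 0\<bar> \<le> hh j"
      using c by (auto simp: cauchy_name_def)
    from l have "vec_code (p j) = [rv (vhd (p j))]" by (rule vec_code_len1)
    then show ?thesis using b x0 by (simp add: xv_def)
  qed
  then show ?thesis using x0 by blast
qed

lemma Pa_E:
  assumes "Pa p"
  obtains x0 where "[x0] \<in> X" "\<forall>j. \<bar>xv p j - x0\<bar> \<le> hh j"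
  using assms cauchy1 unfolding Pa_def by blast

definition "EL p = (SOME q. (\<forall>n. oeval (qL p) e [n] (q n)) \<and> theta_name 1 q (f ` UL p))"
definition "ER p = (SOME q. (\<forall>n. oeval (qR p) e [n] (q n)) \<and> theta_name 1 q (f ` UR p))"

lemma EL_spec: "Pa p \<Longrightarrow> (\<forall>n. oeval (qL p) e [n] (EL p n)) \<and> theta_name 1 (EL p) (f ` UL p)"
proof -
  assume "Pa p"
  then obtain x0 where x0: "[x0] \<in> X" "\<forall>j. \<bar>xv p j - x0\<bar> \<le> hh j" by (rule Pa_E)
  have "UL p \<in> {U. ropen 1 U \<and> U \<subseteq> X}" using UL_open UL_sub[OF x0] by blast
  moreover have "theta_name 1 (qL p) (UL p)" by (simp add: theta_name_bset UL_def)
  ultimately have "\<exists>q. (\<forall>n. oeval (qL p) e [n] (q n)) \<and> theta_name 1 q (f ` UL p)" using fe by blast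
  then show ?thesis unfolding EL_def by (rule someI_ex)
qed

lemma ER_spec: "Pa p \<Longrightarrow> (\<forall>n. oeval (qR p) e [n] (ER p n)) \<and> theta_name 1 (ER p) (f ` UR p)"
proof -
  assume "Pa p"
  then obtain x0 where x0: "[x0] \<in> X" "\<forall>j. \<bar>xv p j - x0\<bar> \<le> hh j" by (rule Pa_E)
  have "UR p \<in> {U. ropen 1 U \<and> U \<subseteq> X}" using UR_open UR_sub[OF x0] by blast
  moreover have "theta_name 1 (qR p) (UR p)" by (simp add: theta_name_bset UR_def)
  ultimately have "\<exists>q. (\<forall>n. oeval (qR p) e [n] (q n)) \<and> theta_name 1 q (f ` UR p)" using fe by blast
  then show ?thesis unfolding ER_def by (rule someI_ex)
qed

definition "QLp = (SOME e. rc (\<lambda>_. True) e (\<lambda>p a. qL p (a 0)))"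
lemma QLp: "rc (\<lambda>_. True) QLp (\<lambda>p a. qL p (a 0))"
  unfolding QLp_def qL_def cLn_def by (rule someI_ex, rule exI, (rule rc_b3 rc_pX)+)
definition "QRp = (SOME e. rc (\<lambda>_. True) e (\<lambda>p a. qR p (a 0)))"
lemma QRp: "rc (\<lambda>_. True) QRp (\<lambda>p a. qR p (a 0))"
  unfolding QRp_def qR_def cRn_def by (rule someI_ex, rule exI, (rule rc_b3 rc_pX)+)

definition "ELp = Cnf (osubst QLp e) [Pf 0]"
definition "ERp = Cnf (osubst QRp e) [Pf 0]"

lemma ELp: "rc Pa ELp (\<lambda>p a. EL p (a 0))"
  unfolding rc_def ELp_def
proof (intro allI impI)
  fix p xs assume P: "Pa p"
  have "oeval (qL p) e [arg xs 0] (EL p (arg xs 0))" using EL_spec[OF P] by blast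
  moreover have "\<And>k. oeval p QLp [k] (qL p k)" using rcD[OF QLp] by (metis arg_Cons ncons_simps(1))
  ultimately have "oeval p (osubst QLp e) [arg xs 0] (EL p (arg xs 0))" by (rule oeval_subst)
  then show "oeval p (Cnf (osubst QLp e) [Pf 0]) xs (EL p (arg xs 0))"
    using oeval.comp[of "[arg xs 0]" "[Pf 0]" p xs] oeval.proj[of p 0 xs] by auto
qed
lemma ERp: "rc Pa ERp (\<lambda>p a. ER p (a 0))"
  unfolding rc_def ERp_def
proof (intro allI impI)
  fix p xs assume P: "Pa p"
  have "oeval (qR p) e [arg xs 0] (ER p (arg xs 0))" using ER_spec[OF P] by blast
  moreover have "\<And>k. oeval p QRp [k] (qR p k)" using rcD[OF QRp] by (metis arg_Cons ncons_simps(1))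
  ultimately have "oeval p (osubst QRp e) [arg xs 0] (ER p (arg xs 0))" by (rule oeval_subst)
  then show "oeval p (Cnf (osubst QRp e) [Pf 0]) xs (ER p (arg xs 0))"
    using oeval.comp[of "[arg xs 0]" "[Pf 0]" p xs] oeval.proj[of p 0 xs] by auto
qed

lemma rc_EL: "rc Pa gg GG \<Longrightarrow> rc Pa (Cnf ELp [gg]) (\<lambda>p a. EL p (GG p a))"
  using rc_Cnf1[OF ELp] by (simp add: arg_def)
lemma rc_ER: "rc Pa gg GG \<Longrightarrow> rc Pa (Cnf ERp [gg]) (\<lambda>p a. ER p (GG p a))"
  using rc_Cnf1[OF ERp] by (simp add: arg_def)

definition "i1 t = pfst (psnd t)"
definition "i2 t = pfst (psnd (psnd t))"
definition "s1 t = pfst (psnd (psnd (psnd t)))"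
definition "s2 t = psnd (psnd (psnd (psnd t)))"
definition "E1 p t = radd (vhd (pfst (EL p (i1 t)))) (condn (s1 t) (rneg (psnd (EL p (i1 t)))) (psnd (EL p (i1 t))))"
definition "E2 p t = radd (vhd (pfst (ER p (i2 t)))) (condn (s2 t) (rneg (psnd (ER p (i2 t)))) (psnd (ER p (i2 t))))"
definition "bodyn p k t = 1 - vlen1b (pfst t) * vlen1b (pfst (EL p (i1 t))) * rltb 0 (psnd (EL p (i1 t))) *
   vlen1b (pfst (ER p (i2 t))) * rltb 0 (psnd (ER p (i2 t))) *
   rleb (radd (vhd (pfst t)) (rneg (rpw k))) (E1 p t) * rleb (E1 p t) (radd (vhd (pfst t)) (rpw k)) *
   rleb (radd (vhd (pfst t)) (rneg (rpw k))) (E2 p t) * rleb (E2 p t) (radd (vhd (pfst t)) (rpw k))"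

definition "E1r p t = dv (EL p (i1 t)) + (if s1 t = 0 then sv (EL p (i1 t)) else - sv (EL p (i1 t)))"
definition "E2r p t = dv (ER p (i2 t)) + (if s2 t = 0 then sv (ER p (i2 t)) else - sv (ER p (i2 t)))"
definition "GOOD p k t \<longleftrightarrow> vlen1b (pfst t) = 1 \<and> vw (EL p (i1 t)) \<and> 0 < sv (EL p (i1 t)) \<and>
   vw (ER p (i2 t)) \<and> 0 < sv (ER p (i2 t)) \<and>
   rv (vhd (pfst t)) - hh k \<le> E1r p t \<and> E1r p t \<le> rv (vhd (pfst t)) + hh k \<and>
   rv (vhd (pfst t)) - hh k \<le> E2r p t \<and> E2r p t \<le> rv (vhd (pfst t)) + hh k"

lemma rvE1: "rv (E1 p t) = E1r p t"
  by (simp add: E1_def E1r_def rv_radd condn_def rv_rneg dv_def sv_def)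
lemma rvE2: "rv (E2 p t) = E2r p t"
  by (simp add: E2_def E2r_def rv_radd condn_def rv_rneg dv_def sv_def)

lemma bodyn_iff: "bodyn p k t = (if GOOD p k t then 0 else 1)"
  unfolding bodyn_def GOOD_def
  by (simp add: rltb_iff rleb_iff rv_radd rv_rneg rv_rpw rvE1 rvE2 vlen1b_iff vw_def sv_def)

definition "BODYp = (SOME e. rc Pa e (\<lambda>p b. bodyn p (b 1) (b 0)))"
lemma BODYp: "rc Pa BODYp (\<lambda>p b. bodyn p (b 1) (b 0))"
  unfolding BODYp_def bodyn_def E1_def E2_def i1_def i2_def s1_def s2_def
  by (rule someI_ex, rule exI, (rule rc_b3 rc_EL rc_ER)+)

end



context A_setup begin

lemma ball_side:
  assumes "\<forall>y. [y] \<in> A \<longrightarrow> (if \<sigma> then y < G else G < y)" "vw b" "0 < sv b" "bset 1 b \<subseteq> A"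
  shows "if \<sigma> then (dv b + sv b \<le> G \<and> dv b - sv b \<le> G) else (G \<le> dv b - sv b \<and> G \<le> dv b + sv b)"
proof -
  have mem: "[y] \<in> A" if "\<bar>y - dv b\<bar> < sv b" for y
    using that assms(2,4) by (auto simp: bset1'S)
  show ?thesis
  proof (cases \<sigma>)
    case True
    have "\<And>y. \<bar>y - dv b\<bar> < sv b \<Longrightarrow> y < G" using mem assms(1) True by auto
    then show ?thesis using endpoint_lt[OF assms(3)] True by simp
  next
    case False
    have "\<And>y. \<bar>y - dv b\<bar> < sv b \<Longrightarrow> G < y" using mem assms(1) False by auto
    then show ?thesis using endpoint_gt[OF assms(3)] False by simp
  qed
qed

context
  fixes p x0
  assumes x0X: "[x0] \<in> X" and xv: "\<forall>j. \<bar>xv p j - x0\<bar> \<le> hh j" and Pp: "Pa p"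
begin

lemma sides: "\<exists>\<sigma>. (\<forall>t. [t] \<in> UL p \<longrightarrow> (if \<sigma> then g t < g x0 else g x0 < g t)) \<and>
                   (\<forall>t. [t] \<in> UR p \<longrightarrow> (if \<sigma> then g x0 < g t else g t < g x0))"
proof -
  obtain t1 where t1: "[t1] \<in> UL p" using UL2[OF x0X xv, of 1] by auto
  obtain t2 where t2: "[t2] \<in> UR p" using UR2[OF x0X xv, of 1] by auto
  have s1: "t1 < x0" "{t1..x0} \<subseteq> S" using UL_seg[OF x0X xv t1] by auto
  have s2: "x0 < t2" "{x0..t2} \<subseteq> S" using UR_seg[OF x0X xv t2] by auto
  have sub: "{t1..t2} \<subseteq> S"
  proof
    fix y assume "y \<in> {t1..t2}"
    then show "y \<in> S" using s1 s2 by (cases "y \<le> x0") auto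
  qed
  have sd1: "\<And>t. t < x0 \<Longrightarrow> {t..x0} \<subseteq> S \<Longrightarrow> (g t < g x0 \<longleftrightarrow> g t1 < g x0)"
    by (rule side(1)[OF g_cont _ s1(1) s2(1) sub]) (auto intro: g_open)
  have sd2: "\<And>t. x0 < t \<Longrightarrow> {x0..t} \<subseteq> S \<Longrightarrow> (g x0 < g t \<longleftrightarrow> g t1 < g x0)"
    by (rule side(2)[OF g_cont _ s1(1) s2(1) sub]) (auto intro: g_open)
  show ?thesis
  proof (intro exI[of _ "g t1 < g x0"] conjI allI impI)
    fix t assume t: "[t] \<in> UL p"
    have st: "t < x0" "{t..x0} \<subseteq> S" using UL_seg[OF x0X xv t] by auto
    have "g t \<noteq> g x0" by (rule inj_open[OF g_cont _ st]) (auto intro: g_open)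
    then show "if g t1 < g x0 then g t < g x0 else g x0 < g t" using sd1[OF st] by auto
  next
    fix t assume t: "[t] \<in> UR p"
    have st: "x0 < t" "{x0..t} \<subseteq> S" using UR_seg[OF x0X xv t] by auto
    have "g x0 \<noteq> g t" by (rule inj_open[OF g_cont _ st]) (auto intro: g_open)
    then show "if g t1 < g x0 then g x0 < g t else g t < g x0" using sd2[OF st] by auto
  qed
qed

lemma fUL: "[y] \<in> f ` UL p \<Longrightarrow> \<exists>t. [t] \<in> UL p \<and> y = g t"
proof -
  assume "[y] \<in> f ` UL p"
  then obtain z where z: "z \<in> UL p" "[y] = f z" by auto
  obtain t k where "z = [t]" using UL1[OF x0X xv z(1)] by blast
  then show ?thesis using z f1 UL_sub[OF x0X xv] by force
qed
lemma fUR: "[y] \<in> f ` UR p \<Longrightarrow> \<exists>t. [t] \<in> UR p \<and> y = g t"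
proof -
  assume "[y] \<in> f ` UR p"
  then obtain z where z: "z \<in> UR p" "[y] = f z" by auto
  obtain t k where "z = [t]" using UR1[OF x0X xv z(1)] by blast
  then show ?thesis using z f1 UR_sub[OF x0X xv] by force
qed

lemma EL_sub: "bset 1 (EL p i) \<subseteq> f ` UL p"
  using EL_spec[OF Pp] by (auto simp: theta_name_bset)
lemma ER_sub: "bset 1 (ER p i) \<subseteq> f ` UR p"
  using ER_spec[OF Pp] by (auto simp: theta_name_bset)
lemma fUL_EL: "z \<in> f ` UL p \<Longrightarrow> \<exists>i. z \<in> bset 1 (EL p i)"
  using EL_spec[OF Pp] by (auto simp: theta_name_bset)
lemma fUR_ER: "z \<in> f ` UR p \<Longrightarrow> \<exists>i. z \<in> bset 1 (ER p i)"
  using ER_spec[OF Pp] by (auto simp: theta_name_bset)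

lemma G2: "GOOD p k t \<Longrightarrow> \<bar>rv (vhd (pfst t)) - g x0\<bar> \<le> hh k"
proof -
  assume G: "GOOD p k t"
  obtain \<sigma> where sg: "\<forall>t. [t] \<in> UL p \<longrightarrow> (if \<sigma> then g t < g x0 else g x0 < g t)"
     "\<forall>t. [t] \<in> UR p \<longrightarrow> (if \<sigma> then g x0 < g t else g t < g x0)" using sides by blast
  have AL: "\<forall>y. [y] \<in> f ` UL p \<longrightarrow> (if \<sigma> then y < g x0 else g x0 < y)"
    using fUL sg(1) by blast
  have AR: "\<forall>y. [y] \<in> f ` UR p \<longrightarrow> (if \<not>\<sigma> then y < g x0 else g x0 < y)"
    using fUR sg(2) by fastforce
  have b1: "if \<sigma> then (dv (EL p (i1 t)) + sv (EL p (i1 t)) \<le> g x0 \<and> dv (EL p (i1 t)) - sv (EL p (i1 t)) \<le> g x0)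
     else (g x0 \<le> dv (EL p (i1 t)) - sv (EL p (i1 t)) \<and> g x0 \<le> dv (EL p (i1 t)) + sv (EL p (i1 t)))"
    using G by (intro ball_side[OF AL _ _ EL_sub]) (auto simp: GOOD_def)
  have b2: "if \<not>\<sigma> then (dv (ER p (i2 t)) + sv (ER p (i2 t)) \<le> g x0 \<and> dv (ER p (i2 t)) - sv (ER p (i2 t)) \<le> g x0)
     else (g x0 \<le> dv (ER p (i2 t)) - sv (ER p (i2 t)) \<and> g x0 \<le> dv (ER p (i2 t)) + sv (ER p (i2 t)))"
    using G by (intro ball_side[OF AR _ _ ER_sub]) (auto simp: GOOD_def)
  show ?thesis
    using G b1 b2 unfolding GOOD_def E1r_def E2r_def
    by (cases \<sigma>; cases "s1 t = 0"; cases "s2 t = 0") (auto simp: abs_le_iff)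
qed

lemma G1: "\<exists>t. GOOD p k t"
proof -
  obtain \<sigma> where sg: "\<forall>t. [t] \<in> UL p \<longrightarrow> (if \<sigma> then g t < g x0 else g x0 < g t)"
     "\<forall>t. [t] \<in> UR p \<longrightarrow> (if \<sigma> then g x0 < g t else g t < g x0)" using sides by blast
  have AL: "\<forall>y. [y] \<in> f ` UL p \<longrightarrow> (if \<sigma> then y < g x0 else g x0 < y)"
    using fUL sg(1) by blast
  have AR: "\<forall>y. [y] \<in> f ` UR p \<longrightarrow> (if \<not>\<sigma> then y < g x0 else g x0 < y)"
    using fUR sg(2) by fastforce
  define \<delta> where "\<delta> = hh (Suc k)"
  have dpos: "\<delta> > 0" and hk: "hh k = 2 * \<delta>" by (auto simp: \<delta>_def)
  obtain d where d: "d > 0" "\<forall>y\<in>X. rdist y [x0] < d \<longrightarrow> rdist (f y) (f [x0]) < \<delta>"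
    using fc x0X dpos unfolding rcont_def by blast
  have cl: "\<bar>g t - g x0\<bar> < \<delta>" if "[t] \<in> X" "\<bar>t - x0\<bar> < d" for t
    using d that f1 x0X by (auto simp: rdist1)
  obtain t1 where t1: "[t1] \<in> UL p" "x0 - d < t1" using UL2[OF x0X xv d(1)] by blast
  have t1x: "t1 < x0" using UL_seg[OF x0X xv t1(1)] by blast
  have gt1: "\<bar>g t1 - g x0\<bar> < \<delta>" using cl[of t1] t1 t1x UL_sub[OF x0X xv] by auto
  obtain t2 where t2: "[t2] \<in> UR p" "t2 < x0 + d" using UR2[OF x0X xv d(1)] by blast
  have t2x: "x0 < t2" using UR_seg[OF x0X xv t2(1)] by blast
  have gt2: "\<bar>g t2 - g x0\<bar> < \<delta>" using cl[of t2] t2 t2x UR_sub[OF x0X xv] by auto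
  have "[g t1] \<in> f ` UL p" using t1(1) f1 UL_sub[OF x0X xv] by (metis image_eqI subsetD)
  then obtain j1 where j1: "[g t1] \<in> bset 1 (EL p j1)" using fUL_EL by blast
  then have bj1: "vw (EL p j1)" "\<bar>g t1 - dv (EL p j1)\<bar> < sv (EL p j1)" using bset_mem by auto
  have "[g t2] \<in> f ` UR p" using t2(1) f1 UR_sub[OF x0X xv] by (metis image_eqI subsetD)
  then obtain j2 where j2: "[g t2] \<in> bset 1 (ER p j2)" using fUR_ER by blast
  then have bj2: "vw (ER p j2)" "\<bar>g t2 - dv (ER p j2)\<bar> < sv (ER p j2)" using bset_mem by auto
  have b1: "if \<sigma> then (dv (EL p j1) + sv (EL p j1) \<le> g x0 \<and> dv (EL p j1) - sv (EL p j1) \<le> g x0)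
     else (g x0 \<le> dv (EL p j1) - sv (EL p j1) \<and> g x0 \<le> dv (EL p j1) + sv (EL p j1))"
    using bj1 by (intro ball_side[OF AL _ _ EL_sub]) auto
  have b2: "if \<not>\<sigma> then (dv (ER p j2) + sv (ER p j2) \<le> g x0 \<and> dv (ER p j2) - sv (ER p j2) \<le> g x0)
     else (g x0 \<le> dv (ER p j2) - sv (ER p j2) \<and> g x0 \<le> dv (ER p j2) + sv (ER p j2))"
    using bj2 by (intro ball_side[OF AR _ _ ER_sub]) auto
  obtain z where z: "z \<in> \<rat>" "g x0 - \<delta> < z" "z < g x0 + \<delta>"
    using Rats_dense_in_real[of "g x0 - \<delta>" "g x0 + \<delta>"] dpos by auto
  obtain zc where zc: "rv zc = z" using rat_code_surj[OF z(1)] by blast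
  define S1 where "S1 = (if \<sigma> then 0 else (1::nat))"
  define S2 where "S2 = (if \<sigma> then 1 else (0::nat))"
  define t where "t = penc (vcons zc 0) (penc j1 (penc j2 (penc S1 S2)))"
  have tt: "pfst t = vcons zc 0" "i1 t = j1" "i2 t = j2" "s1 t = S1" "s2 t = S2"
    by (auto simp: t_def i1_def i2_def s1_def s2_def)
  have "GOOD p k t"
    unfolding GOOD_def E1r_def E2r_def tt
    using bj1 bj2 b1 b2 z zc gt1 gt2 hk
    by (cases \<sigma>) (auto simp: vlen1b_vcons0 S1_def S2_def abs_less_iff)
  then show ?thesis by blast
qed

end

lemma main: "rcomputable 1 1 X f"
proof -
  have rs: "rc Pa (Mnf BODYp) (\<lambda>p a. LEAST t. GOOD p (a 0) t)"
  proof (rule rc_search[OF BODYp])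
    fix p and a :: "nat \<Rightarrow> nat" assume P: "Pa p"
    then obtain x0 where x0: "[x0] \<in> X" "\<forall>j. \<bar>xv p j - x0\<bar> \<le> hh j" by (rule Pa_E)
    have "\<exists>t. GOOD p (a 0) t" by (rule G1[OF x0 P])
    then have "GOOD p (a 0) (LEAST t. GOOD p (a 0) t)" by (rule LeastI_ex)
    then show "bodyn p (ncons (LEAST t. GOOD p (a 0) t) a 1) (ncons (LEAST t. GOOD p (a 0) t) a 0) = 0"
      by (simp add: bodyn_iff)
    fix m assume "m < (LEAST t. GOOD p (a 0) t)"
    then have "\<not> GOOD p (a 0) m" by (rule not_less_Least)
    then show "bodyn p (ncons m a 1) (ncons m a 0) \<noteq> 0" by (simp add: bodyn_iff)
  qed
  have ro: "rc Pa (Cnf PFSTp [Mnf BODYp]) (\<lambda>p a. pfst (LEAST t. GOOD p (a 0) t))"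
    by (rule rc_pfst[OF rs])
  show ?thesis unfolding rcomputable_def computable_on_def
  proof (intro exI[of _ "Cnf PFSTp [Mnf BODYp]"] allI impI)
    fix p x assume x: "x \<in> X" and cn: "cauchy_name 1 p x"
    then have P: "Pa p" by (auto simp: Pa_def)
    obtain x0 where x0: "x = [x0]" "\<forall>j. \<bar>xv p j - x0\<bar> \<le> hh j" using cauchy1[OF cn] by blast
    have x0X: "[x0] \<in> X" using x x0 by simp
    let ?q = "\<lambda>k. pfst (LEAST t. GOOD p k t)"
    have ev: "oeval p (Cnf PFSTp [Mnf BODYp]) [n] (?q n)" for n
      using rcD[OF ro P, of "[n]"] by (simp add: arg_def)
    have "cauchy_name 1 ?q (f x)"
      unfolding cauchy_name_def
    proof (intro conjI allI impI)
      show "length (f x) = 1" using fc x by (auto simp: rcont_def)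
      fix k
      have G: "GOOD p k (LEAST t. GOOD p k t)" by (rule LeastI_ex[OF G1[OF x0X x0(2) P]])
      then have l: "vlen1b (?q k) = 1" by (simp add: GOOD_def)
      then have vc: "vec_code (?q k) = [rv (vhd (?q k))]" using vlen1b_vec vec_code_len1 by blast
      then show "length (vec_code (?q k)) = 1" by simp
      fix i :: nat assume "i < 1"
      then have i0: "i = 0" by simp
      have "\<bar>rv (vhd (?q k)) - g x0\<bar> \<le> hh k" using G2[OF x0X x0(2) P G] .
      then show "\<bar>vec_code (?q k) ! i - f x ! i\<bar> \<le> hh k"
        using vc i0 f1[OF x0X] x0(1) by simp
    qed
    then show "\<exists>q. (\<forall>n. oeval p (Cnf PFSTp [Mnf BODYp]) [n] (q n)) \<and> cauchy_name 1 q (f x)"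
      using ev by (intro exI[of _ ?q] conjI allI) auto
  qed
qed

end

lemma parta:
  assumes "re_open 1 X" "rcont 1 1 X f" "eff_open 1 1 X f"
  shows "rcomputable 1 1 X f"
proof -
  obtain pX where pX: "computable_seq pX" "theta_name 1 pX X" using assms(1) by (auto simp: re_open_def)
  obtain eX where eX: "\<forall>n. oeval (\<lambda>_. 0) eX [n] (pX n)" using pX(1) by (auto simp: computable_seq_def)
  obtain e where e: "\<forall>p U. U \<in> {U. ropen 1 U \<and> U \<subseteq> X} \<longrightarrow> theta_name 1 p U \<longrightarrow>
              (\<exists>q. (\<forall>n. oeval p e [n] (q n)) \<and> theta_name 1 q (f ` U))"
    using assms(3) by (auto simp: eff_open_def computable_on_def)
  have fo: "\<forall>U. ropen 1 U \<and> U \<subseteq> X \<longrightarrow> ropen 1 (f ` U)" using assms(3) by (auto simp: eff_open_def)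
  interpret A: A_setup X f pX eX e
    by unfold_locales (use eX pX(2) assms(2) fo e in auto)
  show ?thesis by (rule A.main)
qed

theorem theorem6:
  shows "(\<forall>X f. re_open 1 X \<and> rcont 1 1 X f \<and> eff_open 1 1 X f \<longrightarrow> rcomputable 1 1 X f)
       \<and> (\<forall>n m X f. re_open n X \<and> rcont n m X f \<and> eff_open n m X f \<and> \<not> rcomputable n m X f
            \<longrightarrow> (\<exists>i<m. rcont n 1 X (\<lambda>x. [f x ! i]) \<and> eff_open n 1 X (\<lambda>x. [f x ! i])
                        \<and> \<not> rcomputable n 1 X (\<lambda>x. [f x ! i])))"
  using parta partb by blast



end
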